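(* Let $k\ge1$. The holonomy translation $\tau\in\mathbb C/Z_k$ of a regular $\frac1k$-translation end of degree $d$ satisfies: $\tau=0$ unless $d\in\{-k,-2k,-3k,\dots\}$, and $\tau\neq0$ if $d=-k$. Conversely, for every $d\in\mathbb Z$ and $\tau\in\mathbb C/Z_k$ satisfying these restrictions, there exists, unique up to equivalence, a regular $\frac1k$-translation end of degree $d$ with holonomy translation $\tau$.
   Context: $Z_k=\{e^{2\pi i m/k}:m\in\mathbb Z\}$ and $\mathrm{Aut}(\mathbb C,dz^k)=\{z\mapsto \zeta z+b:\zeta\in Z_k,b\in\mathbb C\}$. A $\frac1k$-translation surface is a surface with an atlas of charts to $\mathbb C$ with transition maps in $\mathrm{Aut}(\mathbb C,dz^k)$ (equivalently, a Riemann surface with a nowhere vanishing holomorphic $k$-differential, locally $dz^k$). A $\frac1k$-translation end is such a surface homeomorphic to $\mathbb S^1\times[0,1)$; two are equivalent if they become isomorphic after removing a compact subset from each. It is regular, of degree $d\in\mathbb Z$, if it is (up to equivalence) a punctured disk $\{0<|z|\le1\}$ with a nowhere vanishing holomorphic $k$-differential $\phi(z)dz^k$ where $\phi(z)=z^df(z)$, $f$ holomorphic at $0$ with $f(0)\ne0$. For $\sigma(z)=\zeta z+b$, set $\mathrm{tran}_k(\sigma)=0\in\mathbb C/Z_k$ if $\zeta\ne1$ and $\mathrm{tran}_k(\sigma)=[b]\in\mathbb C/Z_k$ if $\zeta=1$ (a conjugacy invariant). The holonomy translation $\tau(F)$ of an end $F$ is $\mathrm{tran}_k$ of the holonomy of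 $F$ along the generator of $\pi_1(F)$ carried by the oriented boundary $\partial F$. *)

theory Defs
  imports "HOL-Analysis.Analysis"
begin

text \<open>Elements of C/Z_k are represented as Z_k-orbits (subsets of the complex plane).\<close>

definition Zk_class :: "nat \<Rightarrow> complex \<Rightarrow> complex set" where
  "Zk_class k b = {exp (2 * of_real pi * \<i> * of_int m / of_nat k) * b | m :: int. True}"

definition tran_k :: "nat \<Rightarrow> complex \<Rightarrow> complex \<Rightarrow> complex set" where
  "tran_k k \<zeta> b = (if \<zeta> = 1 then Zk_class k b else Zk_class k 0)"

text \<open>A regular end of degree d, modelled (up to equivalence) as the punctured disk
  0 < |z| < r with the k-differential phi(z) dz^k, phi(z) = z^d f(z), f holomorphic on the
  disk and nonvanishing (so phi is nowhere vanishing on the punctured disk and f(0) \<noteq> 0).\<close>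

definition regular_end :: "int \<Rightarrow> real \<Rightarrow> (complex \<Rightarrow> complex) \<Rightarrow> bool" where
  "regular_end d r \<phi> \<longleftrightarrow> 0 < r \<and>
     (\<exists>f. f holomorphic_on ball 0 r \<and> (\<forall>z\<in>ball 0 r. f z \<noteq> 0) \<and>
          (\<forall>z\<in>ball 0 r - {0}. \<phi> z = z powi d * f z))"

text \<open>Universal cover of the punctured disk: the half plane Re s < ln r, z = exp s.
  A developing map D satisfies (dD)^k = phi(e^s) (e^s ds)^k; the deck transformation
  s \<mapsto> s + 2 pi i corresponds to the counterclockwise loop, i.e. the oriented boundary.\<close>

definition cover_hp :: "real \<Rightarrow> complex set" where
  "cover_hp r = {s. Re s < ln r}"

definition developing_map :: "nat \<Rightarrow> real \<Rightarrow> (complex \<Rightarrow> complex) \<Rightarrow> (complex \<Rightarrow> complex) \<Rightarrow> bool" where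
  "developing_map k r \<phi> D \<longleftrightarrow> D holomorphic_on cover_hp r \<and>
     (\<forall>s\<in>cover_hp r. (deriv D s) ^ k = \<phi> (exp s) * exp (of_nat k * s))"

definition has_hol_transl :: "nat \<Rightarrow> real \<Rightarrow> (complex \<Rightarrow> complex) \<Rightarrow> complex set \<Rightarrow> bool" where
  "has_hol_transl k r \<phi> \<tau> \<longleftrightarrow>
     (\<exists>D \<zeta> b. developing_map k r \<phi> D \<and> \<zeta> ^ k = 1 \<and>
        (\<forall>s\<in>cover_hp r. D (s + 2 * of_real pi * \<i>) = \<zeta> * D s + b) \<and>
        \<tau> = tran_k k \<zeta> b)"

definition hol_transl :: "nat \<Rightarrow> real \<Rightarrow> (complex \<Rightarrow> complex) \<Rightarrow> complex set" where
  "hol_transl k r \<phi> = (THE \<tau>. has_hol_transl k r \<phi> \<tau>)"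

text \<open>Equivalence of ends: an isomorphism of 1/k-translation structures between punctured
  neighbourhoods of the punctures (it extends holomorphically and injectively over 0).\<close>

definition ends_equiv :: "nat \<Rightarrow> real \<Rightarrow> (complex \<Rightarrow> complex) \<Rightarrow> real \<Rightarrow> (complex \<Rightarrow> complex) \<Rightarrow> bool" where
  "ends_equiv k r1 \<phi>1 r2 \<phi>2 \<longleftrightarrow>
     (\<exists>\<epsilon> h. 0 < \<epsilon> \<and> \<epsilon> \<le> r1 \<and> h holomorphic_on ball 0 \<epsilon> \<and> inj_on h (ball 0 \<epsilon>) \<and>
        h 0 = 0 \<and> h ` ball 0 \<epsilon> \<subseteq> ball 0 r2 \<and>
        (\<forall>z\<in>ball 0 \<epsilon> - {0}. \<phi>2 (h z) * (deriv h z) ^ k = \<phi>1 z))"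

end

theory Submission
  imports Defs "HOL-Complex_Analysis.Complex_Analysis"
begin

lemma exp_int_2pi: "exp (2 * of_real pi * \<i> * of_int m) = 1"
proof -
  have "exp ((2 * of_int m * pi) * \<i>) = 1" by (rule exp_integer_2pi) simp
  then show ?thesis by (simp add: mult_ac)
qed

lemma Zk_class_0: "Zk_class k 0 = {0}"
  unfolding Zk_class_def by auto

lemma Zk_class_self: "b \<in> Zk_class k b"
  unfolding Zk_class_def by (auto intro!: exI[of _ 0])

lemma Zk_class_eq_0_iff: "Zk_class k b = Zk_class k 0 \<longleftrightarrow> b = 0"
  using Zk_class_self[of b k] by (auto simp: Zk_class_0)

lemma root_unity_exp:
  assumes "k \<ge> 1" "(\<eta>::complex)^k = 1"
  shows "\<exists>m::int. \<eta> = exp (2 * of_real pi * \<i> * of_int m / of_nat k)"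
proof -
  have "\<eta> \<in> {z::complex. z^k = 1}" using assms by simp
  then obtain j::nat where "\<eta> = exp (2 * of_real pi * \<i> * of_nat j / of_nat k)"
    using complex_roots_unity[OF assms(1)] by auto
  then show ?thesis by (intro exI[of _ "int j"]) simp
qed

lemma exp_root_pow:
  assumes "k \<ge> 1"
  shows "exp (2 * of_real pi * \<i> * of_int m / of_nat k) ^ k = 1"
proof -
  have "exp (2 * of_real pi * \<i> * of_int m / of_nat k) ^ k
        = exp (of_nat k * (2 * of_real pi * \<i> * of_int m / of_nat k))"
    by (rule exp_of_nat_mult[symmetric])
  also have "of_nat k * (2 * of_real pi * \<i> * of_int m / of_nat k) = 2 * of_real pi * \<i> * of_int m"
    using assms by (simp add: field_simps)
  finally show ?thesis by (simp add: exp_int_2pi)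
qed

lemma Zk_class_rot:
  assumes "k \<ge> 1" "\<eta>^k = 1"
  shows "Zk_class k (\<eta> * b) = Zk_class k b"
proof -
  obtain j::int where j: "\<eta> = exp (2 * of_real pi * \<i> * of_int j / of_nat k)"
    using root_unity_exp[OF assms] by blast
  have e: "exp (2 * of_real pi * \<i> * of_int m / of_nat k) * exp (2 * of_real pi * \<i> * of_int j / of_nat k)
      = exp (2 * of_real pi * \<i> * of_int (m + j) / of_nat k)" for m
    by (simp add: exp_add[symmetric] add_divide_distrib distrib_left)
  show ?thesis
  proof
    show "Zk_class k (\<eta> * b) \<subseteq> Zk_class k b"
    proof
      fix x assume "x \<in> Zk_class k (\<eta> * b)"
      then obtain m where x: "x = exp (2 * of_real pi * \<i> * of_int m / of_nat k) * (\<eta> * b)"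
        unfolding Zk_class_def by auto
      have "x = exp (2 * of_real pi * \<i> * of_int (m + j) / of_nat k) * b"
        unfolding x j using e[of m] by (simp add: mult.assoc[symmetric])
      then show "x \<in> Zk_class k b" unfolding Zk_class_def by blast
    qed
    show "Zk_class k b \<subseteq> Zk_class k (\<eta> * b)"
    proof
      fix x assume "x \<in> Zk_class k b"
      then obtain m where x: "x = exp (2 * of_real pi * \<i> * of_int m / of_nat k) * b"
        unfolding Zk_class_def by auto
      have "x = exp (2 * of_real pi * \<i> * of_int (m - j) / of_nat k) * (\<eta> * b)"
        unfolding x j using e[of "m - j"] by (simp add: mult.assoc[symmetric])
      then show "x \<in> Zk_class k (\<eta> * b)" unfolding Zk_class_def by blast
    qed
  qed
qed

lemma Zk_class_eqD:
  assumes "k \<ge> 1" "Zk_class k b = Zk_class k b'"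
  shows "\<exists>\<eta>. \<eta>^k = 1 \<and> b' = \<eta> * b"
proof -
  have "b' \<in> Zk_class k b" using assms Zk_class_self by blast
  then obtain m where "b' = exp (2 * of_real pi * \<i> * of_int m / of_nat k) * b"
    unfolding Zk_class_def by auto
  then show ?thesis using exp_root_pow[OF assms(1)] by blast
qed

lemma cover_hp_props: "open (cover_hp r)" "convex (cover_hp r)" "connected (cover_hp r)"
  unfolding cover_hp_def by (auto intro: open_halfspace_Re_lt convex_halfspace_Re_lt convex_connected)

lemma cover_hp_shift: "s \<in> cover_hp r \<Longrightarrow> s + 2 * of_real pi * \<i> \<in> cover_hp r"
  unfolding cover_hp_def by simp

lemma cover_hp_ne: "of_real (ln r - 1) \<in> cover_hp r"
  unfolding cover_hp_def by simp

lemma const_deriv_zero: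
  assumes "open S" "s \<in> S" "\<And>x. x \<in> S \<Longrightarrow> D x = K" "(D has_field_derivative D') (at s)"
  shows "D' = 0"
proof -
  have "((\<lambda>_. K) has_field_derivative 0) (at s)" by simp
  then have "(D has_field_derivative 0) (at s)"
    by (rule has_field_derivative_transform_within_open[OF _ assms(1,2)]) (use assms(3) in auto)
  then show ?thesis using assms(4) DERIV_unique by blast
qed

lemma hol_unique:
  assumes k: "k \<ge> 1" and nz: "\<forall>s\<in>cover_hp r. \<phi> (exp s) \<noteq> 0"
    and h1: "has_hol_transl k r \<phi> \<tau>1" and h2: "has_hol_transl k r \<phi> \<tau>2"
  shows "\<tau>1 = \<tau>2"
proof -
  let ?H = "cover_hp r"
  note Hp = cover_hp_props[of r]
  obtain D1 \<zeta>1 b1 where D1: "developing_map k r \<phi> D1" "\<zeta>1 ^ k = 1"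
    "\<forall>s\<in>?H. D1 (s + 2 * of_real pi * \<i>) = \<zeta>1 * D1 s + b1" "\<tau>1 = tran_k k \<zeta>1 b1"
    using h1 unfolding has_hol_transl_def by (elim exE conjE)
  obtain D2 \<zeta>2 b2 where D2: "developing_map k r \<phi> D2" "\<zeta>2 ^ k = 1"
    "\<forall>s\<in>?H. D2 (s + 2 * of_real pi * \<i>) = \<zeta>2 * D2 s + b2" "\<tau>2 = tran_k k \<zeta>2 b2"
    using h2 unfolding has_hol_transl_def by (elim exE conjE)
  have hol1: "D1 holomorphic_on ?H" and hol2: "D2 holomorphic_on ?H"
    using D1(1) D2(1) unfolding developing_map_def by auto
  have der1: "(D1 has_field_derivative deriv D1 s) (at s)" if "s \<in> ?H" for s
    using hol1 Hp(1) that by (meson DERIV_deriv_iff_field_differentiable holomorphic_on_imp_differentiable_at)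
  have der2: "(D2 has_field_derivative deriv D2 s) (at s)" if "s \<in> ?H" for s
    using hol2 Hp(1) that by (meson DERIV_deriv_iff_field_differentiable holomorphic_on_imp_differentiable_at)
  have nz1: "deriv D1 s \<noteq> 0" if "s \<in> ?H" for s
  proof
    assume "deriv D1 s = 0"
    then have "\<phi> (exp s) * exp (of_nat k * s) = 0"
      using D1(1) that k unfolding developing_map_def by (metis power_0_left not_one_le_zero)
    then show False using nz that by simp
  qed
  have nz2: "deriv D2 s \<noteq> 0" if "s \<in> ?H" for s
  proof
    assume "deriv D2 s = 0"
    then have "\<phi> (exp s) * exp (of_nat k * s) = 0"
      using D2(1) that k unfolding developing_map_def by (metis power_0_left not_one_le_zero)
    then show False using nz that by simp
  qed
  define q where "q s = deriv D2 s / deriv D1 s" for s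
  have qk: "q s ^ k = 1" if "s \<in> ?H" for s
    using D1(1) D2(1) that nz1[OF that] nz unfolding developing_map_def q_def
    by (simp add: power_divide)
  have "q holomorphic_on ?H"
    unfolding q_def using hol1 hol2 Hp(1) nz1
    by (intro holomorphic_intros holomorphic_deriv) auto
  then have "continuous_on ?H q" by (rule holomorphic_on_imp_continuous_on)
  moreover have "finite (q ` ?H)"
    by (rule finite_subset[OF _ finite_roots_unity[of k]]) (use qk k in auto)
  ultimately have "q constant_on ?H"
    using continuous_finite_range_constant Hp(3) by blast
  then obtain c where c: "\<And>s. s \<in> ?H \<Longrightarrow> q s = c" unfolding constant_on_def by metis
  have ck: "c ^ k = 1" using qk c cover_hp_ne by metis
  have c0: "c \<noteq> 0" using ck k by (metis not_one_le_zero power_0_left zero_neq_one)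
  have dD2: "deriv D2 s = c * deriv D1 s" if "s \<in> ?H" for s
    using c[OF that] nz1[OF that] unfolding q_def by (simp add: field_simps)
  have "\<exists>e. \<forall>s\<in>?H. D2 s - c * D1 s = e"
  proof (rule has_field_derivative_zero_constant[OF Hp(2)])
    fix s assume s: "s \<in> ?H"
    have "((\<lambda>s. D2 s - c * D1 s) has_field_derivative deriv D2 s - c * deriv D1 s) (at s)"
      by (intro derivative_intros DERIV_cmult der1 der2 s)
    then show "((\<lambda>s. D2 s - c * D1 s) has_field_derivative 0) (at s within ?H)"
      using dD2[OF s] by (simp add: has_field_derivative_at_within)
  qed
  then obtain e where e: "\<And>s. s \<in> ?H \<Longrightarrow> D2 s = c * D1 s + e" by (metis diff_eq_eq add.commute)
  have key: "(\<zeta>1 - \<zeta>2) * c * D1 s = \<zeta>2 * e + b2 - c * b1 - e" if s: "s \<in> ?H" for s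
  proof -
    have "D2 (s + 2 * of_real pi * \<i>) = c * D1 (s + 2 * of_real pi * \<i>) + e"
      using e cover_hp_shift[OF s] by blast
    then have "\<zeta>2 * (c * D1 s + e) + b2 = c * (\<zeta>1 * D1 s + b1) + e"
      using D1(3) D2(3) s e[OF s] by auto
    then show ?thesis by (simp add: algebra_simps)
  qed
  have z12: "\<zeta>1 = \<zeta>2"
  proof (rule ccontr)
    assume ne: "\<zeta>1 \<noteq> \<zeta>2"
    define K where "K = (\<zeta>2 * e + b2 - c * b1 - e) / ((\<zeta>1 - \<zeta>2) * c)"
    have "D1 s = K" if "s \<in> ?H" for s
      using key[OF that] ne c0 unfolding K_def by (simp add: field_simps)
    then have "deriv D1 (of_real (ln r - 1)) = 0"
      using const_deriv_zero[OF Hp(1) cover_hp_ne _ der1[OF cover_hp_ne]] by blast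
    then show False using nz1[OF cover_hp_ne] by simp
  qed
  have b: "c * b1 + e = \<zeta>1 * e + b2"
    using key[OF cover_hp_ne] z12 by (simp add: algebra_simps)
  show ?thesis
  proof (cases "\<zeta>1 = 1")
    case True
    then have "b2 = c * b1" using b by simp
    then show ?thesis using D1(4) D2(4) True z12 Zk_class_rot[OF k ck] by (simp add: tran_k_def)
  next
    case False
    then show ?thesis using D1(4) D2(4) z12 by (simp add: tran_k_def)
  qed
qed

lemma hol_translI:
  assumes "k \<ge> 1" "\<forall>s\<in>cover_hp r. \<phi> (exp s) \<noteq> 0" "has_hol_transl k r \<phi> \<tau>"
  shows "hol_transl k r \<phi> = \<tau>"
  unfolding hol_transl_def
proof (rule the_equality)
  show "has_hol_transl k r \<phi> \<tau>" by fact
  fix t assume "has_hol_transl k r \<phi> t"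
  then show "t = \<tau>" using hol_unique[OF assms(1,2)] assms(3) by blast
qed

lemma reg_end_root:
  assumes "regular_end d r \<phi>" "k \<ge> 1"
  obtains f g where "0 < r" "f holomorphic_on ball 0 r" "\<forall>z\<in>ball 0 r. f z \<noteq> 0"
    "\<forall>z\<in>ball 0 r - {0}. \<phi> z = z powi d * f z"
    "g holomorphic_on ball 0 r" "\<forall>z\<in>ball 0 r. g z ^ k = f z" "\<forall>z\<in>ball 0 r. g z \<noteq> 0"
proof -
  obtain f where f: "0 < r" "f holomorphic_on ball 0 r" "\<forall>z\<in>ball 0 r. f z \<noteq> 0"
    "\<forall>z\<in>ball 0 r - {0}. \<phi> z = z powi d * f z"
    using assms(1) unfolding regular_end_def by blast
  obtain L where L: "L holomorphic_on ball 0 r" "\<And>z. z \<in> ball 0 r \<Longrightarrow> f z = exp (L z)"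
    using contractible_imp_holomorphic_log[OF f(2) convex_imp_contractible[OF convex_ball]] f(3) by metis
  define g where "g z = exp (L z / of_nat k)" for z
  have "g holomorphic_on ball 0 r" unfolding g_def using L(1) by (intro holomorphic_intros) auto
  moreover have "g z ^ k = f z" if "z \<in> ball 0 r" for z
  proof -
    have "g z ^ k = exp (of_nat k * (L z / of_nat k))" unfolding g_def by (rule exp_of_nat_mult[symmetric])
    also have "\<dots> = f z" using assms(2) L(2)[OF that] by simp
    finally show ?thesis .
  qed
  moreover have "\<forall>z\<in>ball 0 r. g z \<noteq> 0" unfolding g_def by simp
  ultimately show ?thesis using f that by blast
qed

lemma exp_in_ball: "s \<in> cover_hp r \<Longrightarrow> 0 < r \<Longrightarrow> exp s \<in> ball 0 r - {0}"
  unfolding cover_hp_def by (auto simp: dist_norm) (metis exp_less_cancel_iff exp_ln)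

lemma holomorphic_from_DERIV:
  assumes "open S" "\<And>s. s \<in> S \<Longrightarrow> (D has_field_derivative D' s) (at s)"
  shows "D holomorphic_on S"
  unfolding holomorphic_on_def using assms
  by (meson field_differentiable_at_within field_differentiable_def)

lemma dev_hol:
  assumes k: "k \<ge> 1" and r: "0 < r" and gh: "g holomorphic_on ball 0 r"
    and phi: "\<forall>z\<in>ball 0 r - {0}. \<phi> z = z powi d * g z ^ k"
    and gnz: "\<forall>z\<in>ball 0 r - {0}. g z \<noteq> 0"
    and alpha: "of_nat k * \<alpha> = of_int (d + int k)"
    and D: "\<forall>s\<in>cover_hp r. (D has_field_derivative exp (\<alpha> * s) * g (exp s)) (at s)"
    and s0: "s0 \<in> cover_hp r"
  shows "hol_transl k r \<phi> = tran_k k (exp (2 * of_real pi * \<i> * \<alpha>))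
            (D (s0 + 2 * of_real pi * \<i>) - exp (2 * of_real pi * \<i> * \<alpha>) * D s0)"
proof -
  let ?H = "cover_hp r"
  let ?w = "2 * of_real pi * \<i>"
  define \<zeta> where "\<zeta> = exp (?w * \<alpha>)"
  note Hp = cover_hp_props[of r]
  have nz: "\<forall>s\<in>?H. \<phi> (exp s) \<noteq> 0"
    using phi gnz exp_in_ball[OF _ r] by (auto simp: power_int_0_left_if)
  have dm: "developing_map k r \<phi> D"
    unfolding developing_map_def
  proof
    show "D holomorphic_on ?H" by (rule holomorphic_from_DERIV[OF Hp(1)]) (use D in blast)
    show "\<forall>s\<in>?H. deriv D s ^ k = \<phi> (exp s) * exp (of_nat k * s)"
    proof
      fix s assume s: "s \<in> ?H"
      have "deriv D s = exp (\<alpha> * s) * g (exp s)" using D s by (simp add: DERIV_imp_deriv)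
      then have "deriv D s ^ k = exp (of_nat k * (\<alpha> * s)) * g (exp s) ^ k"
        by (simp add: power_mult_distrib exp_of_nat_mult)
      also have "of_nat k * (\<alpha> * s) = of_int d * s + of_nat k * s"
        using alpha by (metis (no_types, lifting) distrib_right mult.assoc of_int_add of_int_of_nat_eq)
      also have "exp (of_int d * s + of_nat k * s) * g (exp s) ^ k
           = (exp s powi d * g (exp s) ^ k) * exp (of_nat k * s)"
        by (simp add: exp_add exp_power_int)
      also have "\<dots> = \<phi> (exp s) * exp (of_nat k * s)" using phi exp_in_ball[OF s r] by simp
      finally show "deriv D s ^ k = \<phi> (exp s) * exp (of_nat k * s)" .
    qed
  qed
  have zk: "\<zeta> ^ k = 1"
  proof -
    have "\<zeta> ^ k = exp (of_nat k * (?w * \<alpha>))" unfolding \<zeta>_def by (rule exp_of_nat_mult[symmetric])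
    also have "of_nat k * (?w * \<alpha>) = 2 * of_real pi * \<i> * of_int (d + int k)"
      using alpha by (metis mult.commute mult.left_commute)
    finally show ?thesis by (simp only: exp_int_2pi)
  qed
  have "\<exists>c. \<forall>s\<in>?H. D (s + ?w) - \<zeta> * D s = c"
  proof (rule has_field_derivative_zero_constant[OF Hp(2)])
    fix s assume s: "s \<in> ?H"
    have s': "s + ?w \<in> ?H" using cover_hp_shift[OF s] .
    have "((\<lambda>s. D (s + ?w)) has_field_derivative exp (\<alpha> * (s + ?w)) * g (exp (s + ?w))) (at s)"
      using D s' DERIV_shift by blast
    then have "((\<lambda>s. D (s + ?w) - \<zeta> * D s) has_field_derivative
        exp (\<alpha> * (s + ?w)) * g (exp (s + ?w)) - \<zeta> * (exp (\<alpha> * s) * g (exp s))) (at s)"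
      by (intro derivative_intros DERIV_cmult) (use D s in auto)
    moreover have "exp (\<alpha> * (s + ?w)) * g (exp (s + ?w)) - \<zeta> * (exp (\<alpha> * s) * g (exp s)) = 0"
      unfolding \<zeta>_def by (simp add: exp_add distrib_left mult_ac)
    ultimately show "((\<lambda>s. D (s + ?w) - \<zeta> * D s) has_field_derivative 0) (at s within ?H)"
      by (simp add: has_field_derivative_at_within)
  qed
  then obtain c where c: "\<And>s. s \<in> ?H \<Longrightarrow> D (s + ?w) - \<zeta> * D s = c" by blast
  have "has_hol_transl k r \<phi> (tran_k k \<zeta> (D (s0 + ?w) - \<zeta> * D s0))"
    unfolding has_hol_transl_def
    by (rule exI[of _ D], rule exI[of _ \<zeta>], rule exI[of _ "D (s0 + ?w) - \<zeta> * D s0"])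
       (use dm zk c s0 in \<open>auto simp: algebra_simps\<close>)
  then show ?thesis using hol_translI[OF k nz] unfolding \<zeta>_def by (simp add: mult_ac)
qed

lemma prim_open_convex:
  assumes "f holomorphic_on S" "open S" "convex S"
  obtains P where "\<And>z. z \<in> S \<Longrightarrow> (P has_field_derivative f z) (at z)"
proof -
  obtain P where "\<And>z. z \<in> S \<Longrightarrow> (P has_field_derivative f z) (at z within S)"
    using holomorphic_convex_primitive'[OF assms(3,2,1)] by metis
  then show ?thesis using that assms(2) by (metis at_within_open)
qed

lemma taylor_decomp:
  fixes g :: "complex \<Rightarrow> complex"
  assumes "g holomorphic_on ball 0 r" "0 < r"
  shows "\<exists>a q. q holomorphic_on ball 0 r \<and> (\<forall>z\<in>ball 0 r. g z = (\<Sum>j<n. a j * z^j) + z^n * q z)"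
proof (induction n)
  case 0
  then show ?case using assms(1) by (intro exI[of _ "\<lambda>_. 0"] exI[of _ g]) auto
next
  case (Suc n)
  then obtain a q where q: "q holomorphic_on ball 0 r" "\<forall>z\<in>ball 0 r. g z = (\<Sum>j<n. a j * z^j) + z^n * q z"
    by blast
  define q' where "q' = (\<lambda>z. if z = 0 then deriv q 0 else (q z - q 0) / (z - 0))"
  have hq': "q' holomorphic_on ball 0 r" unfolding q'_def
    by (rule pole_lemma[OF q(1)]) (use assms(2) in auto)
  have qq: "q z = q 0 + z * q' z" for z :: complex unfolding q'_def by auto
  show ?case
  proof (intro exI[of _ "a(n := q 0)"] exI[of _ q'] conjI ballI hq')
    fix z :: complex assume z: "z \<in> ball 0 r"
    have "(\<Sum>j<Suc n. (a(n := q 0)) j * z^j) = (\<Sum>j<n. a j * z^j) + q 0 * z^n"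
      by (simp add: sum.lessThan_Suc)
    then show "g z = (\<Sum>j<Suc n. (a(n := q 0)) j * z^j) + z^Suc n * q' z"
      using q(2) z qq[of z] by (simp add: algebra_simps)
  qed
qed

lemma DERIV_exp_lin:
  assumes "c \<noteq> 0"
  shows "((\<lambda>z. b * exp (c * z) / c) has_field_derivative b * exp (c * s)) (at s)"
  using assms by (auto intro!: derivative_eq_intros)

lemma hol_notdvd:
  assumes reg: "regular_end d r \<phi>" and k: "k \<ge> 1" and nd: "\<not> int k dvd d"
  shows "hol_transl k r \<phi> = Zk_class k 0"
proof -
  obtain f g where fg: "0 < r" "f holomorphic_on ball 0 r" "\<forall>z\<in>ball 0 r. f z \<noteq> 0"
    "\<forall>z\<in>ball 0 r - {0}. \<phi> z = z powi d * f z"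
    "g holomorphic_on ball 0 r" "\<forall>z\<in>ball 0 r. g z ^ k = f z" "\<forall>z\<in>ball 0 r. g z \<noteq> 0"
    using reg_end_root[OF reg k] by metis
  define \<alpha> where "\<alpha> = (of_int (d + int k) / of_nat k :: complex)"
  have al: "of_nat k * \<alpha> = of_int (d + int k)" using k unfolding \<alpha>_def by simp
  have "(g \<circ> exp) holomorphic_on cover_hp r"
    by (rule holomorphic_on_compose_gen[OF holomorphic_on_exp fg(5)]) (use exp_in_ball[OF _ fg(1)] in blast)
  then have hol: "(\<lambda>s. exp (\<alpha> * s) * g (exp s)) holomorphic_on cover_hp r"
    unfolding o_def by (intro holomorphic_intros)
  obtain D where D: "\<And>s. s \<in> cover_hp r \<Longrightarrow> (D has_field_derivative exp (\<alpha> * s) * g (exp s)) (at s)"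
    using prim_open_convex[OF hol cover_hp_props(1,2)] by blast
  have h: "hol_transl k r \<phi> = tran_k k (exp (2 * of_real pi * \<i> * \<alpha>))
            (D (of_real (ln r - 1) + 2 * of_real pi * \<i>) - exp (2 * of_real pi * \<i> * \<alpha>) * D (of_real (ln r - 1)))"
    by (rule dev_hol[OF k fg(1,5) _ _ al _ cover_hp_ne]) (use fg D in auto)
  have "exp (2 * of_real pi * \<i> * \<alpha>) \<noteq> 1"
  proof
    assume "exp (2 * of_real pi * \<i> * \<alpha>) = 1"
    then obtain n::int where "Im (2 * of_real pi * \<i> * \<alpha>) = of_int (2 * n) * pi"
      by (auto simp: exp_eq_1)
    moreover have "Im (2 * of_real pi * \<i> * \<alpha>) = 2 * pi * (of_int (d + int k) / of_nat k)"
      unfolding \<alpha>_def by simp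
    ultimately have E: "2 * pi * (of_int (d + int k) / real k) = 2 * pi * of_int n" by (simp add: mult_ac)
    have "2 * pi \<noteq> 0" by simp
    then have "of_int (d + int k) / real k = of_int n" using E mult_cancel_left by blast
    then have "real_of_int (d + int k) = of_int n * real k" using k by (simp add: field_simps)
    then have "d + int k = n * int k" by (metis of_int_eq_iff of_int_mult of_int_of_nat_eq)
    then have "d = (n - 1) * int k" by (simp add: algebra_simps)
    then have "int k dvd d" by simp
    then show False using nd by simp
  qed
  then show ?thesis using h by (simp add: tran_k_def)
qed

lemma hol_pos:
  assumes reg: "regular_end d r \<phi>" and k: "k \<ge> 1" and de: "d = int k * int e"
  shows "hol_transl k r \<phi> = Zk_class k 0"
proof -
  obtain f g where fg: "0 < r" "f holomorphic_on ball 0 r" "\<forall>z\<in>ball 0 r. f z \<noteq> 0"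
    "\<forall>z\<in>ball 0 r - {0}. \<phi> z = z powi d * f z"
    "g holomorphic_on ball 0 r" "\<forall>z\<in>ball 0 r. g z ^ k = f z" "\<forall>z\<in>ball 0 r. g z \<noteq> 0"
    using reg_end_root[OF reg k] by metis
  define \<alpha> where "\<alpha> = (of_nat (e + 1) :: complex)"
  have al: "of_nat k * \<alpha> = of_int (d + int k)" unfolding \<alpha>_def de by (simp add: algebra_simps)
  have "(\<lambda>z. z ^ e * g z) holomorphic_on ball 0 r" using fg(5) by (intro holomorphic_intros)
  then obtain P where P: "\<And>z. z \<in> ball 0 r \<Longrightarrow> (P has_field_derivative z ^ e * g z) (at z)"
    using prim_open_convex[of _ "ball 0 r"] by auto
  have D: "((\<lambda>s. P (exp s)) has_field_derivative exp (\<alpha> * s) * g (exp s)) (at s)"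
    if s: "s \<in> cover_hp r" for s
  proof -
    have "((\<lambda>s. P (exp s)) has_field_derivative (exp s ^ e * g (exp s)) * exp s) (at s)"
      by (rule DERIV_chain'[OF DERIV_exp P]) (use exp_in_ball[OF s fg(1)] in auto)
    moreover have "(exp s ^ e * g (exp s)) * exp s = exp (\<alpha> * s) * g (exp s)"
      unfolding \<alpha>_def by (simp add: exp_of_nat_mult[symmetric] distrib_right exp_add)
    ultimately show ?thesis by simp
  qed
  have h: "hol_transl k r \<phi> = tran_k k (exp (2 * of_real pi * \<i> * \<alpha>))
            (P (exp (of_real (ln r - 1) + 2 * of_real pi * \<i>)) - exp (2 * of_real pi * \<i> * \<alpha>) * P (exp (of_real (ln r - 1))))"
    by (rule dev_hol[OF k fg(1,5) _ _ al _ cover_hp_ne, where D = "\<lambda>s. P (exp s)"]) (use fg D in auto)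
  have "exp (2 * of_real pi * \<i> * \<alpha>) = 1"
    unfolding \<alpha>_def using exp_int_2pi[of "int (e + 1)"] by simp
  then show ?thesis using h by (simp add: tran_k_def exp_add)
qed

lemma hol_neg:
  assumes k: "k \<ge> 1" and r: "0 < r" and gh: "g holomorphic_on ball 0 r"
    and phi: "\<forall>z\<in>ball 0 r - {0}. \<phi> z = z powi d * g z ^ k"
    and gnz: "\<forall>z\<in>ball 0 r. g z \<noteq> 0"
    and n: "n = Suc m" and d: "d = - (int n * int k)"
    and qh: "q holomorphic_on ball 0 r"
    and dec: "\<forall>z\<in>ball 0 r. g z = (\<Sum>j<n. a j * z^j) + z^n * q z"
  shows "hol_transl k r \<phi> = Zk_class k (2 * of_real pi * \<i> * a m)"
proof -
  define \<alpha> where "\<alpha> = - (of_nat m :: complex)"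
  have al: "of_nat k * \<alpha> = of_int (d + int k)" unfolding \<alpha>_def d n by (simp add: algebra_simps)
  obtain Q where Q: "\<And>z. z \<in> ball 0 r \<Longrightarrow> (Q has_field_derivative q z) (at z)"
    using prim_open_convex[OF qh] by auto
  define c where "c j = (of_int (int j - int m) :: complex)" for j
  have c0: "j < m \<Longrightarrow> c j \<noteq> 0" for j unfolding c_def by simp
  define D where "D s = (\<Sum>j<m. a j * exp (c j * s) / c j) + a m * s + Q (exp s)" for s
  have D: "(D has_field_derivative exp (\<alpha> * s) * g (exp s)) (at s)"
    if s: "s \<in> cover_hp r" for s
  proof -
    have es: "exp s \<in> ball 0 r" using exp_in_ball[OF s r] by auto
    have "(D has_field_derivative (\<Sum>j<m. a j * exp (c j * s)) + a m * 1 + q (exp s) * exp s) (at s)"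
      unfolding D_def
      by (intro derivative_intros DERIV_chain'[OF DERIV_exp Q] es DERIV_exp_lin c0) auto
    moreover have "exp (\<alpha> * s) * g (exp s) = (\<Sum>j<m. a j * exp (c j * s)) + a m + q (exp s) * exp s"
    proof -
      have e1: "exp (\<alpha> * s) * exp s ^ j = exp (c j * s)" for j
        unfolding \<alpha>_def c_def by (simp add: exp_of_nat_mult[symmetric] exp_add[symmetric] algebra_simps)
      have e2: "exp (\<alpha> * s) * exp s ^ n = exp s"
        unfolding \<alpha>_def n by (simp add: exp_of_nat_mult[symmetric] exp_add[symmetric] algebra_simps)
      have "exp (\<alpha> * s) * g (exp s) = (\<Sum>j<n. a j * (exp (\<alpha> * s) * exp s ^ j)) + exp (\<alpha> * s) * exp s ^ n * q (exp s)"
        using dec es by (simp add: sum_distrib_left algebra_simps)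
      also have "\<dots> = (\<Sum>j<n. a j * exp (c j * s)) + exp s * q (exp s)"
        unfolding e2 by (simp only: e1)
      finally show ?thesis unfolding n using sum.lessThan_Suc[of "\<lambda>j. a j * exp (c j * s)" m]
        by (simp add: c_def mult_ac)
    qed
    ultimately show ?thesis by simp
  qed
  let ?s0 = "of_real (ln r - 1) :: complex"
  let ?w = "2 * of_real pi * \<i>"
  have h: "hol_transl k r \<phi> = tran_k k (exp (?w * \<alpha>))
            (D (?s0 + ?w) - exp (?w * \<alpha>) * D ?s0)"
    by (rule dev_hol[OF k r gh phi _ al _ cover_hp_ne]) (use gnz D in auto)
  have e1: "exp (?w * \<alpha>) = 1"
    unfolding \<alpha>_def using exp_int_2pi[of "- int m"] by simp
  have e2: "exp (c j * (?s0 + ?w)) = exp (c j * ?s0)" for j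
  proof -
    have "exp (c j * (?s0 + ?w)) = exp (c j * ?s0) * exp (?w * of_int (int j - int m))"
      unfolding c_def by (simp add: exp_add[symmetric] algebra_simps)
    then show ?thesis by (simp only: exp_int_2pi mult_1_right)
  qed
  have ew: "exp (?s0 + ?w) = exp ?s0" by (simp add: exp_add)
  have "D (?s0 + ?w) = (\<Sum>j<m. a j * exp (c j * ?s0) / c j) + a m * (?s0 + ?w) + Q (exp ?s0)"
    unfolding D_def ew e2 ..
  then have "D (?s0 + ?w) - D ?s0 = ?w * a m"
    by (simp add: D_def algebra_simps)
  then show ?thesis using h e1 by (simp add: tran_k_def mult_ac)
qed

lemma compose_nf:
  fixes \<psi>0 \<psi>1 \<psi>2 N1 N2 :: "complex \<Rightarrow> complex"
  assumes h1: "N1 holomorphic_on ball 0 \<rho>1" and z1: "N1 0 = 0" and d1: "deriv N1 0 \<noteq> 0" and p1: "0 < \<rho>1"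
    and e1: "\<forall>z\<in>ball 0 \<rho>1 - {0}. \<psi>0 (N1 z) * (deriv N1 z)^k = \<psi>1 z"
    and h2: "N2 holomorphic_on ball 0 \<rho>2" and z2: "N2 0 = 0" and d2: "deriv N2 0 \<noteq> 0" and p2: "0 < \<rho>2"
    and e2: "\<forall>z\<in>ball 0 \<rho>2 - {0}. \<psi>0 (N2 z) * (deriv N2 z)^k = \<psi>2 z"
  shows "\<exists>\<epsilon> h. 0 < \<epsilon> \<and> \<epsilon> \<le> \<rho>1 \<and> h holomorphic_on ball 0 \<epsilon> \<and> inj_on h (ball 0 \<epsilon>) \<and>
        h 0 = 0 \<and> h ` ball 0 \<epsilon> \<subseteq> ball 0 \<rho>2 \<and>
        (\<forall>z\<in>ball 0 \<epsilon> - {0}. \<psi>2 (h z) * (deriv h z) ^ k = \<psi>1 z)"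
proof -
  obtain \<sigma> where \<sigma>: "\<sigma> > 0" "ball (0::complex) \<sigma> \<subseteq> ball 0 \<rho>2" "inj_on N2 (ball 0 \<sigma>)"
    using has_complex_derivative_locally_injective[OF h2 _ open_ball d2] p2 by auto
  have h2': "N2 holomorphic_on ball 0 \<sigma>" by (rule holomorphic_on_subset[OF h2 \<sigma>(2)])
  obtain G where G: "G holomorphic_on (N2 ` ball 0 \<sigma>)"
      "\<And>z. z \<in> ball 0 \<sigma> \<Longrightarrow> deriv N2 z * deriv G (N2 z) = 1"
      "\<And>z. z \<in> ball 0 \<sigma> \<Longrightarrow> G (N2 z) = z"
    using holomorphic_has_inverse[OF h2' open_ball \<sigma>(3)] by blast
  define V where "V = N2 ` ball 0 \<sigma>"
  have oV: "open V" unfolding V_def by (rule open_mapping_thm3[OF h2' open_ball \<sigma>(3)])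
  have V0: "0 \<in> V" unfolding V_def using z2 \<sigma>(1) by (metis centre_in_ball image_eqI)
  obtain \<eta> where \<eta>: "\<eta> > 0" "ball (0::complex) \<eta> \<subseteq> V" using oV V0 open_contains_ball by blast
  obtain \<sigma>1 where \<sigma>1: "\<sigma>1 > 0" "ball (0::complex) \<sigma>1 \<subseteq> ball 0 \<rho>1" "inj_on N1 (ball 0 \<sigma>1)"
    using has_complex_derivative_locally_injective[OF h1 _ open_ball d1] p1 by auto
  have "continuous (at 0) N1"
    using continuous_on_interior[OF holomorphic_on_imp_continuous_on[OF h1]] p1 by simp
  then obtain \<delta> where \<delta>: "\<delta> > 0" "\<And>z. dist z 0 < \<delta> \<Longrightarrow> dist (N1 z) (N1 0) < \<eta>"
    unfolding continuous_at_eps_delta using \<eta>(1) by blast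
  define \<epsilon> where "\<epsilon> = min \<delta> (min \<sigma>1 \<rho>1)"
  have \<epsilon>: "\<epsilon> > 0" "ball (0::complex) \<epsilon> \<subseteq> ball 0 \<sigma>1" "\<epsilon> \<le> \<rho>1" using \<delta> \<sigma>1 p1 unfolding \<epsilon>_def by auto
  have N1V: "N1 z \<in> V" if "z \<in> ball 0 \<epsilon>" for z
    using \<delta>(2)[of z] that \<eta>(2) z1 unfolding \<epsilon>_def by (auto simp: dist_commute)
  define h where "h z = G (N1 z)" for z
  have hol1: "N1 holomorphic_on ball 0 \<epsilon>" by (rule holomorphic_on_subset[OF h1]) (use \<epsilon>(2) \<sigma>1(2) in auto)
  have hh: "h holomorphic_on ball 0 \<epsilon>"
    unfolding h_def using holomorphic_on_compose_gen[OF hol1 G(1)] N1V unfolding V_def o_def by (simp add: image_subset_iff)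
  have Ginv: "\<exists>y\<in>ball 0 \<sigma>. N1 z = N2 y \<and> h z = y" if "z \<in> ball 0 \<epsilon>" for z
    using N1V[OF that] G(3) unfolding V_def h_def by auto
  have inj: "inj_on h (ball 0 \<epsilon>)"
  proof (rule inj_onI)
    fix x y assume x: "x \<in> ball 0 \<epsilon>" and y: "y \<in> ball 0 \<epsilon>" and e: "h x = h y"
    obtain x' where x': "x' \<in> ball 0 \<sigma>" "N1 x = N2 x'" "h x = x'" using Ginv[OF x] by blast
    obtain y' where y': "y' \<in> ball 0 \<sigma>" "N1 y = N2 y'" "h y = y'" using Ginv[OF y] by blast
    have "N1 x = N1 y" using x' y' e by simp
    then show "x = y" using inj_onD[OF \<sigma>1(3)] x y \<epsilon>(2) by (simp add: subset_iff)
  qed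
  have h0: "h 0 = 0" unfolding h_def using z1 z2 G(3)[of 0] \<sigma>(1) by simp
  have himg: "h ` ball 0 \<epsilon> \<subseteq> ball 0 \<rho>2"
  proof
    fix w assume "w \<in> h ` ball 0 \<epsilon>"
    then obtain z where z: "z \<in> ball 0 \<epsilon>" "w = h z" by blast
    obtain y where y: "y \<in> ball 0 \<sigma>" "N1 z = N2 y" "h z = y" using Ginv[OF z(1)] by blast
    show "w \<in> ball 0 \<rho>2" using y z \<sigma>(2) by auto
  qed
  have eq: "\<psi>2 (h z) * (deriv h z) ^ k = \<psi>1 z" if z: "z \<in> ball 0 \<epsilon> - {0}" for z
  proof -
    have zz: "z \<in> ball 0 \<epsilon>" using z by simp
    obtain y where y: "y \<in> ball 0 \<sigma>" "N1 z = N2 y" "h z = y" using Ginv[OF zz] by blast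
    have y0: "y \<noteq> 0"
    proof
      assume "y = 0"
      then have "h z = h 0" using y(3) h0 by simp
      then have "z = 0" by (rule inj_onD[OF inj]) (use zz \<epsilon>(1) in auto)
      then show False using z by simp
    qed
    have zb1: "z \<in> ball 0 \<rho>1" using z \<epsilon>(2) \<sigma>1(2) by blast
    have dN1: "(N1 has_field_derivative deriv N1 z) (at z)"
      using holomorphic_derivI[OF h1 open_ball zb1] .
    have oV': "open (N2 ` ball 0 \<sigma>)" using oV unfolding V_def .
    have dG: "(G has_field_derivative deriv G (N1 z)) (at (N1 z))"
      using holomorphic_derivI[OF G(1) oV'] N1V[OF zz] unfolding V_def by simp
    have "deriv h z = deriv G (N1 z) * deriv N1 z"
      unfolding h_def[abs_def] by (rule DERIV_imp_deriv, rule DERIV_chain'[OF dN1 dG])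
    moreover have "\<psi>2 y = \<psi>0 (N2 y) * (deriv N2 y)^k"
      using e2 y(1) y0 \<sigma>(2) by auto
    ultimately have "\<psi>2 (h z) * (deriv h z) ^ k
        = (\<psi>0 (N2 y) * (deriv N2 y)^k) * (deriv G (N2 y))^k * (deriv N1 z)^k"
      using y by (simp add: power_mult_distrib)
    also have "\<dots> = \<psi>0 (N1 z) * (deriv N1 z)^k * (deriv N2 y * deriv G (N2 y))^k"
      using y(2) by (simp add: power_mult_distrib mult_ac)
    also have "\<dots> = \<psi>1 z" using G(2)[OF y(1)] e1 zb1 z by simp
    finally show ?thesis .
  qed
  show ?thesis
    apply (rule exI[of _ \<epsilon>], rule exI[of _ h])
    using \<epsilon>(1,3) hh inj h0 himg eq by simp
qed

lemma nf_b1: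
  fixes g :: "complex \<Rightarrow> complex"
  assumes gh: "g holomorphic_on ball 0 r" and r: "0 < r" and g0: "g 0 \<noteq> 0"
  shows "\<exists>N. N holomorphic_on ball 0 r \<and> N 0 = 0 \<and> deriv N 0 \<noteq> 0 \<and>
           (\<forall>z\<in>ball 0 r - {0}. (g 0 / N z) * deriv N z = g z / z)"
proof -
  define c where "c = g 0"
  define q where "q = (\<lambda>z. if z = 0 then deriv g 0 else (g z - g 0) / (z - 0))"
  have qh: "q holomorphic_on ball 0 r" unfolding q_def
    by (rule pole_lemma[OF gh]) (use r in auto)
  obtain Q where Q: "\<And>z. z \<in> ball 0 r \<Longrightarrow> (Q has_field_derivative q z) (at z)"
    using prim_open_convex[OF qh open_ball convex_ball] by blast
  define N where "N z = z * exp (Q z / c)" for z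
  have dN: "(N has_field_derivative exp (Q z / c) + z * (exp (Q z / c) * (q z / c))) (at z)"
    if "z \<in> ball 0 r" for z
    using g0 unfolding N_def[abs_def] c_def
    by (auto intro!: derivative_eq_intros Q[OF that] simp: field_simps)
  have Nh: "N holomorphic_on ball 0 r"
    by (rule holomorphic_from_DERIV[OF open_ball]) (use dN in blast)
  have N0: "N 0 = 0" unfolding N_def by simp
  have dN0: "deriv N 0 \<noteq> 0" using DERIV_imp_deriv[OF dN[of 0]] r by simp
  have eq: "(c / N z) * deriv N z = g z / z" if z: "z \<in> ball 0 r - {0}" for z
  proof -
    have zb: "z \<in> ball 0 r" and z0: "z \<noteq> 0" using z by auto
    have "deriv N z = exp (Q z / c) + z * (exp (Q z / c) * (q z / c))"
      using DERIV_imp_deriv[OF dN[OF zb]] .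
    also have "\<dots> = exp (Q z / c) * (g z / c)"
      using z0 g0 unfolding q_def c_def by (simp add: field_simps)
    finally show ?thesis unfolding N_def using z0 g0 unfolding c_def by (simp add: field_simps)
  qed
  show ?thesis using Nh N0 dN0 eq unfolding c_def by blast
qed

lemma implicit_log:
  fixes A :: "complex \<Rightarrow> complex" and c a0 :: complex
  assumes Ah: "A holomorphic_on ball 0 r" and r: "0 < r" and a0: "a0 \<noteq> 0" and m: "m \<ge> 1"
    and A0: "of_nat m * A 0 = - a0"
  shows "\<exists>\<rho> lf. 0 < \<rho> \<and> \<rho> \<le> r \<and> lf holomorphic_on ball 0 \<rho> \<and>
            (\<forall>z\<in>ball 0 \<rho>. exp (lf z) + c * z^m * lf z + of_nat m * A z = 0)"
proof -
  define L0 where "L0 = Ln a0"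
  have eL0: "exp L0 = a0" unfolding L0_def using a0 by simp
  define \<delta> :: real where "\<delta> = 1/8"
  define K where "K = cball L0 \<delta>"
  have na0: "norm a0 > 0" using a0 by simp
  have contA: "continuous (at 0) A"
    using continuous_on_interior[OF holomorphic_on_imp_continuous_on[OF Ah]] r by simp
  have "continuous (at 0) (\<lambda>z::complex. c * z^m)" by (intro continuous_intros)
  then obtain \<delta>1 where \<delta>1: "\<delta>1 > 0" "\<And>z::complex. dist z 0 < \<delta>1 \<Longrightarrow> dist (c * z^m) (c * 0^m) < norm a0 / 4"
    unfolding continuous_at_eps_delta using na0 by (metis divide_pos_pos zero_less_numeral)
  have "continuous (at 0) (\<lambda>z::complex. a0 + c * z^m * L0 + of_nat m * A z)"
    by (intro continuous_intros contA)
  then obtain \<delta>2 where \<delta>2: "\<delta>2 > 0" "\<And>z::complex. dist z 0 < \<delta>2 \<Longrightarrow>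
      dist (a0 + c * z^m * L0 + of_nat m * A z) (a0 + c * 0^m * L0 + of_nat m * A 0) < norm a0 * \<delta> / 2"
    unfolding continuous_at_eps_delta using na0 unfolding \<delta>_def
    by (metis divide_pos_pos mult_pos_pos zero_less_numeral zero_less_divide_1_iff)
  have m0: "(0::complex)^m = 0" using m by simp
  define \<rho>0 where "\<rho>0 = min r (min \<delta>1 \<delta>2)"
  have \<rho>0: "\<rho>0 > 0" "\<rho>0 \<le> r" unfolding \<rho>0_def using r \<delta>1 \<delta>2 by auto
  have B1: "norm (c * z^m) < norm a0 / 4" if "z \<in> ball 0 \<rho>0" for z
    using \<delta>1(2)[of z] that m0 unfolding \<rho>0_def by (simp add: dist_norm)
  have B2: "norm (a0 + c * z^m * L0 + of_nat m * A z) < norm a0 * \<delta> / 2" if "z \<in> ball 0 \<rho>0" for z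
    using \<delta>2(2)[of z] that m0 A0 unfolding \<rho>0_def by (simp add: dist_norm)
  define T where "T z w = w - (exp w + c * z^m * w + of_nat m * A z) / a0" for z w
  have expK: "norm (exp w - a0) \<le> norm a0 / 4" if "w \<in> K" for w
  proof -
    have "norm (exp w - exp L0) \<le> (2 * norm a0) * norm (w - L0)"
    proof (rule field_differentiable_bound[of K exp exp])
      show "convex K" unfolding K_def by simp
      show "(exp has_field_derivative exp u) (at u within K)" for u by (rule has_field_derivative_at_within[OF DERIV_exp])
      show "norm (exp u) \<le> 2 * norm a0" if "u \<in> K" for u
      proof -
        have "norm (u - L0) \<le> 1/2" using that unfolding K_def \<delta>_def by (simp add: dist_norm norm_minus_commute)
        then have "norm (exp (u - L0)) \<le> 2" by (rule exp_bound_half)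
        moreover have "exp u = a0 * exp (u - L0)" using eL0 a0 by (simp add: exp_diff)
        ultimately show ?thesis by (simp add: norm_mult mult.commute mult_left_mono)
      qed
      show "w \<in> K" by fact
      show "L0 \<in> K" unfolding K_def \<delta>_def by simp
    qed
    also have "norm (w - L0) \<le> \<delta>" using that unfolding K_def by (simp add: dist_norm norm_minus_commute)
    then have "(2 * norm a0) * norm (w - L0) \<le> (2 * norm a0) * \<delta>" by (simp add: mult_left_mono)
    finally show ?thesis using eL0 unfolding \<delta>_def by simp
  qed
  have lip: "norm (T z w1 - T z w2) \<le> 1/2 * norm (w1 - w2)"
    if z: "z \<in> ball 0 \<rho>0" and w: "w1 \<in> K" "w2 \<in> K" for z w1 w2
  proof (rule field_differentiable_bound[of K "T z" "\<lambda>w. 1 - (exp w + c * z^m) / a0"])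
    show "convex K" unfolding K_def by simp
    show "(T z has_field_derivative 1 - (exp u + c * z^m) / a0) (at u within K)" for u
      unfolding T_def using a0 by (auto intro!: derivative_eq_intros simp: field_simps)
    show "norm (1 - (exp u + c * z^m) / a0) \<le> 1/2" if "u \<in> K" for u
    proof -
      have "1 - (exp u + c * z^m) / a0 = ((a0 - exp u) - c * z^m) / a0" using a0 by (simp add: field_simps)
      then have "norm (1 - (exp u + c * z^m) / a0) = norm ((a0 - exp u) - c * z^m) / norm a0"
        by (simp add: norm_divide)
      also have "norm ((a0 - exp u) - c * z^m) \<le> norm (a0 - exp u) + norm (c * z^m)"
        by (rule norm_triangle_ineq4)
      also have "norm (a0 - exp u) \<le> norm a0 / 4" using expK[OF that] by (simp add: norm_minus_commute)
      finally have "norm (1 - (exp u + c * z^m) / a0) \<le> (norm a0 / 4 + norm (c * z^m)) / norm a0"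
        using na0 by (simp add: divide_right_mono)
      also have "\<dots> \<le> (norm a0 / 4 + norm a0 / 4) / norm a0"
        using B1[OF z] na0 by (simp add: divide_right_mono)
      also have "\<dots> = 1/2" using na0 by simp
      finally show ?thesis .
    qed
  qed (use w in auto)
  have self: "T z w \<in> K" if z: "z \<in> ball 0 \<rho>0" and w: "w \<in> K" for z w
  proof -
    have l0K: "L0 \<in> K" unfolding K_def \<delta>_def by simp
    have "T z L0 - L0 = - (a0 + c * z^m * L0 + of_nat m * A z) / a0"
      unfolding T_def using eL0 a0 by (simp add: field_simps)
    then have "norm (T z L0 - L0) = norm (a0 + c * z^m * L0 + of_nat m * A z) / norm a0"
      by (simp only: norm_divide norm_minus_cancel)
    also have "\<dots> \<le> \<delta> / 2"
      using B2[OF z] na0 by (simp add: pos_divide_le_eq mult.commute)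
    finally have n1: "norm (T z L0 - L0) \<le> \<delta> / 2" .
    have n2: "norm (T z w - T z L0) \<le> \<delta> / 2"
    proof -
      have "norm (T z w - T z L0) \<le> 1/2 * norm (w - L0)" by (rule lip[OF z w l0K])
      also have "norm (w - L0) \<le> \<delta>" using w unfolding K_def by (simp add: dist_norm norm_minus_commute)
      finally show ?thesis by simp
    qed
    have "norm (T z w - L0) \<le> norm (T z w - T z L0) + norm (T z L0 - L0)"
      by (rule norm_diff_triangle_ineq[of "T z w" "T z L0" "T z L0" L0, simplified])
    then show ?thesis using n1 n2 unfolding K_def by (simp add: dist_norm norm_minus_commute)
  qed
  have fix_ex: "\<exists>w\<in>K. T z w = w" if z: "z \<in> ball 0 \<rho>0" for z
  proof -
    have "\<exists>!w\<in>K. T z w = w"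
    proof (rule Banach_fix[of K "1/2"])
      show "complete K" unfolding K_def by (simp add: complete_eq_closed)
      show "K \<noteq> {}" unfolding K_def \<delta>_def by simp
      show "T z ` K \<subseteq> K" using self[OF z] by blast
      show "dist (T z x) (T z y) \<le> 1/2 * dist x y" if "x \<in> K" "y \<in> K" for x y
        using lip[OF z that] by (simp add: dist_norm)
    qed auto
    then show ?thesis by blast
  qed
  then obtain lf where lf: "\<And>z. z \<in> ball 0 \<rho>0 \<Longrightarrow> lf z \<in> K \<and> T z (lf z) = lf z"
    by metis
  define U where "U j z = (T z ^^ j) L0" for j z
  have U_Suc: "U (Suc j) z = T z (U j z)" for j z unfolding U_def by simp
  have UK: "U j z \<in> K" if "z \<in> ball 0 \<rho>0" for j z
  proof (induction j)
    case 0 then show ?case unfolding U_def K_def \<delta>_def by simp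
  next
    case (Suc j) then show ?case unfolding U_Suc using self[OF that] by blast
  qed
  have Uerr: "norm (U j z - lf z) \<le> (1/2)^j * \<delta>" if z: "z \<in> ball 0 \<rho>0" for j z
  proof (induction j)
    case 0
    have "lf z \<in> K" using lf[OF z] by blast
    then show ?case unfolding U_def K_def by (simp add: dist_norm)
  next
    case (Suc j)
    have "norm (U (Suc j) z - lf z) = norm (T z (U j z) - T z (lf z))" using lf[OF z] U_Suc by simp
    also have "\<dots> \<le> 1/2 * norm (U j z - lf z)" using lip[OF z UK[OF z] conjunct1[OF lf[OF z]]] .
    also have "\<dots> \<le> 1/2 * ((1/2)^j * \<delta>)" using Suc by simp
    finally show ?case by simp
  qed
  have Uh: "U j holomorphic_on ball 0 \<rho>0" for j
  proof (induction j)
    case 0 then show ?case unfolding U_def by simp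
  next
    case (Suc j)
    have Ah': "A holomorphic_on ball 0 \<rho>0" by (rule holomorphic_on_subset[OF Ah]) (use \<rho>0(2) in auto)
    have "(\<lambda>z. T z (U j z)) holomorphic_on ball 0 \<rho>0"
      unfolding T_def using a0 by (intro holomorphic_intros Suc Ah')
    then show ?case unfolding U_Suc[abs_def] by simp
  qed
  define \<rho> where "\<rho> = \<rho>0 / 2"
  have \<rho>: "\<rho> > 0" "\<rho> \<le> r" "cball (0::complex) \<rho> \<subseteq> ball 0 \<rho>0" unfolding \<rho>_def using \<rho>0 by auto
  have ulim: "uniform_limit (cball 0 \<rho>) U lf sequentially"
  proof (rule uniform_limitI)
    fix e :: real assume e: "e > 0"
    have "((\<lambda>j. (1/2)^j * \<delta>) \<longlongrightarrow> 0 * \<delta>) sequentially"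
      by (intro tendsto_mult LIMSEQ_power_zero tendsto_const) simp
    then have "eventually (\<lambda>j. (1/2)^j * \<delta> < e) sequentially"
      using e by (simp add: order_tendstoD(2))
    then show "eventually (\<lambda>j. \<forall>z\<in>cball 0 \<rho>. dist (U j z) (lf z) < e) sequentially"
    proof (rule eventually_mono)
      fix j assume j: "(1/2)^j * \<delta> < e"
      show "\<forall>z\<in>cball 0 \<rho>. dist (U j z) (lf z) < e"
      proof
        fix z :: complex assume "z \<in> cball 0 \<rho>"
        then have "z \<in> ball 0 \<rho>0" using \<rho>(3) by blast
        then have "norm (U j z - lf z) \<le> (1/2)^j * \<delta>" by (rule Uerr)
        then show "dist (U j z) (lf z) < e" using j by (simp add: dist_norm)
      qed
    qed
  qed
  have "lf holomorphic_on ball 0 \<rho>"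
  proof (rule holomorphic_uniform_limit[OF _ ulim])
    show "eventually (\<lambda>j. continuous_on (cball 0 \<rho>) (U j) \<and> U j holomorphic_on ball 0 \<rho>) sequentially"
    proof (rule always_eventually, intro allI conjI)
      fix j
      show "continuous_on (cball 0 \<rho>) (U j)"
        using holomorphic_on_imp_continuous_on[OF Uh[of j]] \<rho>(3) continuous_on_subset by blast
      show "U j holomorphic_on ball 0 \<rho>"
        using Uh[of j] by (rule holomorphic_on_subset) (use \<rho>(3) ball_subset_cball in blast)
    qed
  qed auto
  moreover have "exp (lf z) + c * z^m * lf z + of_nat m * A z = 0" if "z \<in> ball 0 \<rho>" for z
  proof -
    have "z \<in> ball 0 \<rho>0" using that \<rho>(3) ball_subset_cball by blast
    then have "T z (lf z) = lf z" using lf by blast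
    then show ?thesis unfolding T_def using a0 by simp
  qed
  ultimately show ?thesis using \<rho> by blast
qed

lemma powi_neg_nat: "(z::complex) powi (- int n) = inverse (z ^ n)"
  by (simp add: power_int_minus)

lemma sum_at_0: "(\<Sum>j<Suc m. a j * (0::complex)^j) = a 0"
  by (simp add: sum.lessThan_Suc_shift del: sum.lessThan_Suc)

lemma nf_b2:
  fixes g q :: "complex \<Rightarrow> complex" and a :: "nat \<Rightarrow> complex"
  assumes gh: "g holomorphic_on ball 0 r" and r: "0 < r" and g0: "g 0 \<noteq> 0"
    and n: "n = Suc m" and m: "m \<ge> 1" and qh: "q holomorphic_on ball 0 r"
    and dec: "\<forall>z\<in>ball 0 r. g z = (\<Sum>j<n. a j * z^j) + z^n * q z"
  shows "\<exists>\<rho> N. 0 < \<rho> \<and> \<rho> \<le> r \<and> N holomorphic_on ball 0 \<rho> \<and> N 0 = 0 \<and> deriv N 0 \<noteq> 0 \<and>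
           (\<forall>z\<in>ball 0 \<rho> - {0}. ((N z) powi (- int n) + a m / N z) * deriv N z = z powi (- int n) * g z)"
proof -
  define c where "c = a m"
  define a0 where "a0 = a 0"
  have ga0: "g 0 = a0" using dec r unfolding a0_def n by (simp add: sum_at_0)
  have a0: "a0 \<noteq> 0" using ga0 g0 by simp
  obtain Q where Q: "\<And>z. z \<in> ball 0 r \<Longrightarrow> (Q has_field_derivative q z) (at z)"
    using prim_open_convex[OF qh open_ball convex_ball] by blast
  define cj where "cj j = (of_int (int j - int m) :: complex)" for j
  have cj0: "j < m \<Longrightarrow> cj j \<noteq> 0" for j unfolding cj_def by simp
  define A where "A z = (\<Sum>j<m. a j / cj j * z^j) + z^m * Q z" for z
  define A' where "A' z = (\<Sum>j<m. a j / cj j * (of_nat j * z^(j-1))) + (of_nat m * z^(m-1) * Q z + z^m * q z)" for z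
  have dA: "(A has_field_derivative A' z) (at z)" if z: "z \<in> ball 0 r" for z
  proof -
    have t: "((\<lambda>z. a j / cj j * z^j) has_field_derivative a j / cj j * (of_nat j * z^(j-1))) (at z)" for j
    proof -
      have "((\<lambda>z. z^j) has_field_derivative of_nat j * z^(j-1)) (at z)"
        using DERIV_power[OF DERIV_ident, of j z] by simp
      then show ?thesis by (rule DERIV_cmult)
    qed
    have "((\<lambda>z. z^m * Q z) has_field_derivative of_nat m * z^(m-1) * Q z + z^m * q z) (at z)"
      by (auto intro!: derivative_eq_intros Q[OF z])
    then show ?thesis unfolding A_def[abs_def] A'_def
      by (intro DERIV_add DERIV_sum t)
  qed
  have Ah: "A holomorphic_on ball 0 r"
    by (rule holomorphic_from_DERIV[OF open_ball]) (use dA in blast)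
  have zpow: "z * z^(m-1) = z^m" for z :: complex using m by (metis Suc_pred' less_le_trans power_Suc zero_less_one)
  have zj: "z * (of_nat j * z^(j-1)) = of_nat j * z^j" for z :: complex and j
    by (cases j) auto
  have KA: "z * A' z - of_nat m * A z = g z - c * z^m" if z: "z \<in> ball 0 r" for z
  proof -
    have s1: "z * (\<Sum>j<m. a j / cj j * (of_nat j * z^(j-1))) - of_nat m * (\<Sum>j<m. a j / cj j * z^j)
          = (\<Sum>j<m. a j * z^j)"
    proof -
      have t1: "z * (a j / cj j * (of_nat j * z^(j-1))) - of_nat m * (a j / cj j * z^j) = a j * z^j"
        if "j < m" for j
      proof -
        have E: "z * (a j / cj j * (of_nat j * z^(j-1))) = a j / cj j * (of_nat j * z^j)"
          using zj[of z j] by (metis mult.left_commute)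
        have "z * (a j / cj j * (of_nat j * z^(j-1))) - of_nat m * (a j / cj j * z^j)
            = a j / cj j * (of_nat j * z^j) - of_nat m * (a j / cj j * z^j)" by (simp only: E)
        also have "\<dots> = a j / cj j * z^j * (of_nat j - of_nat m)" using cj0[OF that] by (simp add: field_simps)
        also have "(of_nat j - of_nat m :: complex) = cj j" unfolding cj_def by simp
        also have "a j / cj j * z^j * cj j = a j * z^j" using cj0[OF that] by simp
        finally show ?thesis .
      qed
      have "z * (\<Sum>j<m. a j / cj j * (of_nat j * z^(j-1))) - of_nat m * (\<Sum>j<m. a j / cj j * z^j)
          = (\<Sum>j<m. z * (a j / cj j * (of_nat j * z^(j-1))) - of_nat m * (a j / cj j * z^j))"
        by (simp add: sum_distrib_left sum_subtractf)
      also have "\<dots> = (\<Sum>j<m. a j * z^j)"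
        by (intro sum.cong refl t1) simp
      finally show ?thesis .
    qed
    have "g z = (\<Sum>j<m. a j * z^j) + c * z^m + z^n * q z"
      using dec z unfolding n c_def by simp
    moreover have "z * (of_nat m * z^(m-1) * Q z + z^m * q z) - of_nat m * (z^m * Q z) = z^n * q z"
      unfolding n using zpow[of z] by (simp add: algebra_simps)
    ultimately show ?thesis unfolding A_def A'_def using s1 by (simp add: algebra_simps)
  qed
  have A0: "of_nat m * A 0 = - a0"
  proof -
    obtain m' where m': "m = Suc m'" using m by (cases m) auto
    have "A 0 = a 0 / cj 0" unfolding A_def m'
      by (simp add: sum.lessThan_Suc_shift del: sum.lessThan_Suc)
    then show ?thesis unfolding cj_def a0_def using m by (simp add: field_simps)
  qed
  obtain \<rho> lf where lf: "0 < \<rho>" "\<rho> \<le> r" "lf holomorphic_on ball 0 \<rho>"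
      "\<forall>z\<in>ball 0 \<rho>. exp (lf z) + c * z^m * lf z + of_nat m * A z = 0"
    using implicit_log[OF Ah r a0 m A0, of c] by blast
  have mnz: "(of_nat m :: complex) \<noteq> 0" using m by simp
  define N where "N z = z * exp (- lf z / of_nat m)" for z
  have dlf: "(lf has_field_derivative deriv lf z) (at z)" if "z \<in> ball 0 \<rho>" for z
    using holomorphic_derivI[OF lf(3) open_ball that] .
  have dN: "(N has_field_derivative exp (- lf z / of_nat m) + z * (exp (- lf z / of_nat m) * (- deriv lf z / of_nat m))) (at z)"
    if "z \<in> ball 0 \<rho>" for z
    unfolding N_def[abs_def] using mnz
    by (auto intro!: derivative_eq_intros dlf[OF that] simp: field_simps)
  have Nh: "N holomorphic_on ball 0 \<rho>"
    by (rule holomorphic_from_DERIV[OF open_ball]) (use dN in blast)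
  have N0: "N 0 = 0" unfolding N_def by simp
  have dN0: "deriv N 0 \<noteq> 0" using DERIV_imp_deriv[OF dN[of 0]] lf(1) by simp
  have eq: "((N z) powi (- int n) + c / N z) * deriv N z = z powi (- int n) * g z"
    if z: "z \<in> ball 0 \<rho> - {0}" for z
  proof -
    have zb: "z \<in> ball 0 \<rho>" and z0: "z \<noteq> 0" using z by auto
    have zr: "z \<in> ball 0 r" using zb lf(2) by auto
    define E where "E = exp (- lf z / of_nat m)"
    define V where "V = exp (lf z)"
    define L' where "L' = deriv lf z"
    have E0: "E \<noteq> 0" unfolding E_def by simp
    have EV: "E^m * V = 1" unfolding E_def V_def using mnz
      by (simp add: exp_of_nat_mult[symmetric] exp_add[symmetric])
    have I: "V + c * z^m * lf z + of_nat m * A z = 0" using lf(4) zb unfolding V_def by blast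
    have D: "V * L' + c * (of_nat m * z^(m-1) * lf z + z^m * L') + of_nat m * A' z = 0"
    proof (rule const_deriv_zero[OF open_ball zb])
      show "\<And>x. x \<in> ball 0 \<rho> \<Longrightarrow> exp (lf x) + c * x^m * lf x + of_nat m * A x = 0" using lf(4) by blast
      have dA': "(A has_field_derivative A' z) (at z)" using dA[OF zr] .
      show "((\<lambda>x. exp (lf x) + c * x^m * lf x + of_nat m * A x) has_field_derivative
             V * L' + c * (of_nat m * z^(m-1) * lf z + z^m * L') + of_nat m * A' z) (at z)"
        unfolding V_def L'_def
        by (auto intro!: derivative_eq_intros dlf[OF zb] dA' simp: algebra_simps)
    qed
    have dNz: "deriv N z = E * (1 - z * L' / of_nat m)"
      using DERIV_imp_deriv[OF dN[OF zb]] unfolding E_def L'_def using mnz by (simp add: field_simps)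
    have X: "(V + c * z^m) * (1 - z * L' / of_nat m) = g z"
    proof -
      have "(V + c * z^m) * (1 - z * L' / of_nat m) = V + c * z^m - z / of_nat m * (V * L' + c * z^m * L')"
        using mnz by (simp add: field_simps)
      also have "V * L' + c * z^m * L' = - (c * of_nat m * z^(m-1) * lf z + of_nat m * A' z)"
        using D by (simp add: algebra_simps eq_neg_iff_add_eq_0)
      also have "V + c * z^m - z / of_nat m * - (c * of_nat m * z^(m-1) * lf z + of_nat m * A' z)
          = V + c * z^m + c * (z * z^(m-1)) * lf z + z * A' z"
        using mnz by (simp add: field_simps)
      also have "\<dots> = (V + c * z^m * lf z + of_nat m * A z) + c * z^m + (z * A' z - of_nat m * A z)"
        unfolding zpow by (simp add: algebra_simps)
      also have "\<dots> = g z" using I KA[OF zr] by simp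
      finally show ?thesis .
    qed
    have NE: "N z = z * E" unfolding N_def E_def ..
    have "((N z) powi (- int n) + c / N z) * deriv N z
        = (inverse (z^n * E^n) + c / (z * E)) * (E * (1 - z * L' / of_nat m))"
      unfolding powi_neg_nat NE dNz by (simp add: power_mult_distrib)
    also have "\<dots> = inverse (z^n) * ((inverse (E^m) + c * z^m) * (1 - z * L' / of_nat m))"
      using z0 E0 unfolding n by (simp add: field_simps)
    also have "inverse (E^m) = V" using EV E0 by (simp add: field_simps)
    finally show ?thesis unfolding powi_neg_nat using X by simp
  qed
  show ?thesis using lf(1,2) Nh N0 dN0 eq unfolding c_def by blast
qed

lemma fps_ode:
  fixes g :: "complex \<Rightarrow> complex" and a :: complex
  assumes gh: "g holomorphic_on ball 0 r" and r: "0 < r"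
    and na: "\<And>j. of_nat j + a \<noteq> 0" and B: "\<And>j. norm (1 / (of_nat j + a)) \<le> Bd"
  shows "\<exists>G. G holomorphic_on ball 0 r \<and> (\<forall>z\<in>ball 0 r. a * G z + z * deriv G z = g z) \<and> a * G 0 = g 0"
proof -
  define F where "F = fps_expansion g 0"
  have gh': "g holomorphic_on eball 0 (ereal r)" using gh by simp
  have RF: "fps_conv_radius F \<ge> ereal r" unfolding F_def by (rule conv_radius_fps_expansion[OF gh'])
  have evF: "eval_fps F z = g z" if "norm z < r" for z
    using eval_fps_expansion'[OF gh', of z] that unfolding F_def by simp
  define Fa where "Fa = Abs_fps (\<lambda>j. fps_nth F j / (of_nat j + a))"
  have RFa: "fps_conv_radius Fa \<ge> fps_conv_radius F"
    unfolding fps_conv_radius_def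
  proof (rule conv_radius_geI_ex')
    fix \<rho> :: real assume \<rho>: "0 < \<rho>" "ereal \<rho> < conv_radius (fps_nth F)"
    have s: "summable (\<lambda>n. norm (fps_nth F n * of_real \<rho> ^ n))"
      by (rule abs_summable_in_conv_radius) (use \<rho> in simp)
    have bnd: "norm (fps_nth Fa n * of_real \<rho> ^ n) \<le> Bd * norm (fps_nth F n * of_real \<rho> ^ n)" for n
    proof -
      have "fps_nth Fa n * of_real \<rho> ^ n = (1 / (of_nat n + a)) * (fps_nth F n * of_real \<rho> ^ n)"
        unfolding Fa_def by simp
      then have "norm (fps_nth Fa n * of_real \<rho> ^ n) = norm (1 / (of_nat n + a)) * norm (fps_nth F n * of_real \<rho> ^ n)"
        by (simp only: norm_mult)
      also have "\<dots> \<le> Bd * norm (fps_nth F n * of_real \<rho> ^ n)"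
        by (rule mult_right_mono[OF B]) simp
      finally show ?thesis .
    qed
    show "summable (\<lambda>n. fps_nth Fa n * of_real \<rho> ^ n)"
      by (rule summable_comparison_test'[where N=0, OF summable_mult[OF s, of Bd]]) (simp add: bnd)
  qed
  define G where "G = eval_fps Fa"
  have Rz: "ereal (norm z) < fps_conv_radius Fa" if "z \<in> ball 0 r" for z :: complex
  proof -
    have "ereal (norm z) < ereal r" using that by simp
    then have "ereal (norm z) < fps_conv_radius F" by (rule order_less_le_trans[OF _ RF])
    then show ?thesis by (rule order_less_le_trans[OF _ RFa])
  qed
  have Gh: "G holomorphic_on ball 0 r"
    unfolding G_def by (rule holomorphic_from_DERIV[OF open_ball has_field_derivative_eval_fps[OF Rz]])
  have fid: "fps_const a * Fa + fps_X * fps_deriv Fa = F"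
  proof (rule fps_ext)
    fix n
    show "fps_nth (fps_const a * Fa + fps_X * fps_deriv Fa) n = fps_nth F n"
    proof (cases n)
      case 0 then show ?thesis unfolding Fa_def using na[of 0] by simp
    next
      case (Suc n')
      have "a * (fps_nth F n / (of_nat n + a)) + of_nat n * (fps_nth F n / (of_nat n + a))
          = (of_nat n + a) * (fps_nth F n / (of_nat n + a))" by (simp add: algebra_simps add_divide_distrib)
      also have "\<dots> = fps_nth F n" using na[of n] by simp
      finally have "a * (fps_nth F n / (of_nat n + a)) + of_nat n * (fps_nth F n / (of_nat n + a)) = fps_nth F n" .
      then show ?thesis unfolding Fa_def using Suc by (simp add: algebra_simps)
    qed
  qed
  have ode: "a * G z + z * deriv G z = g z" if z: "z \<in> ball 0 r" for z
  proof -
    have Rd: "ereal (norm z) < fps_conv_radius (fps_deriv Fa)"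
      using Rz[OF z] fps_conv_radius_deriv[of Fa] order_less_le_trans by blast
    have "deriv G z = eval_fps (fps_deriv Fa) z"
      unfolding G_def by (rule eval_fps_deriv[symmetric, OF Rz[OF z]])
    moreover have "eval_fps (fps_const a * Fa + fps_X * fps_deriv Fa) z
        = a * eval_fps Fa z + z * eval_fps (fps_deriv Fa) z"
    proof -
      have R1: "ereal (norm z) < fps_conv_radius (fps_const a * Fa)"
        using Rz[OF z] fps_conv_radius_mult[of "fps_const a" Fa] by (simp add: order_less_le_trans)
      have R2: "ereal (norm z) < fps_conv_radius (fps_X * fps_deriv Fa)"
        using Rd fps_conv_radius_mult[of fps_X "fps_deriv Fa"] by (simp add: order_less_le_trans)
      show ?thesis
        using R1 R2 Rd Rz[OF z] by (simp add: eval_fps_add eval_fps_mult)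
    qed
    ultimately show ?thesis using fid evF z unfolding G_def by simp
  qed
  have "a * G 0 = g 0"
    unfolding G_def using evF[of 0] r unfolding Fa_def using na[of 0] by (simp add: eval_fps_at_0)
  then show ?thesis using Gh ode by blast
qed

lemma nf_a:
  fixes g :: "complex \<Rightarrow> complex" and d :: int
  assumes gh: "g holomorphic_on ball 0 r" and r: "0 < r" and g0: "g 0 \<noteq> 0" and k: "k \<ge> 1"
    and cond: "\<forall>j::nat. int j * int k + d + int k \<noteq> 0"
  shows "\<exists>\<rho> N. 0 < \<rho> \<and> \<rho> \<le> r \<and> N holomorphic_on ball 0 \<rho> \<and> N 0 = 0 \<and> deriv N 0 \<noteq> 0 \<and>
           (\<forall>z\<in>ball 0 \<rho> - {0}. (N z) powi d * (deriv N z)^k = z powi d * g z ^ k)"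
proof -
  define p where "p = d + int k"
  define a where "a = (of_int p / of_nat k :: complex)"
  have kz: "(of_nat k :: complex) \<noteq> 0" using k by simp
  have ja: "of_nat j + a = of_int (int j * int k + p) / of_nat k" for j
    unfolding a_def using kz by (simp add: field_simps)
  have na: "of_nat j + a \<noteq> 0" for j
  proof -
    have "int j * int k + p \<noteq> 0" using cond[rule_format, of j] unfolding p_def by (simp add: add.assoc)
    then have "(of_int (int j * int k + p) :: complex) \<noteq> 0" by (metis of_int_eq_0_iff)
    then show ?thesis unfolding ja using kz by (metis divide_eq_0_iff)
  qed
  have B: "norm (1 / (of_nat j + a)) \<le> real k" for j
  proof -
    define M where "M = int j * int k + p"
    have M0: "M \<noteq> 0" using cond[rule_format, of j] unfolding M_def p_def by (simp add: add.assoc)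
    then have M1: "1 \<le> \<bar>real_of_int M\<bar>" by linarith
    have "norm (1 / (of_nat j + a)) = real k / \<bar>real_of_int M\<bar>"
      unfolding ja M_def[symmetric] by (simp add: norm_divide)
    also have "\<dots> \<le> real k" using M1 by (simp add: divide_le_eq mult_le_cancel_left1)
    finally show ?thesis .
  qed
  obtain G where G: "G holomorphic_on ball 0 r" "\<forall>z\<in>ball 0 r. a * G z + z * deriv G z = g z" "a * G 0 = g 0"
    using fps_ode[OF gh r na B] by blast
  define H where "H z = a * G z" for z
  have Hh: "H holomorphic_on ball 0 r" unfolding H_def using G(1) by (intro holomorphic_intros)
  have H0: "H 0 \<noteq> 0" unfolding H_def using G(3) g0 by simp
  have "continuous (at 0) H"
    using continuous_on_interior[OF holomorphic_on_imp_continuous_on[OF Hh]] r by simp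
  then obtain \<delta> where \<delta>: "\<delta> > 0" "\<And>z. dist z 0 < \<delta> \<Longrightarrow> dist (H z) (H 0) < norm (H 0)"
    unfolding continuous_at_eps_delta using H0 by (metis zero_less_norm_iff)
  define \<rho> where "\<rho> = min \<delta> r"
  have \<rho>: "0 < \<rho>" "\<rho> \<le> r" unfolding \<rho>_def using \<delta> r by auto
  have sub: "ball (0::complex) \<rho> \<subseteq> ball 0 r" using \<rho> by auto
  have Hnz: "H z \<noteq> 0" if "z \<in> ball 0 \<rho>" for z
  proof
    assume "H z = 0"
    moreover have "dist z 0 < \<delta>" using that unfolding \<rho>_def by (simp add: dist_commute)
    ultimately show False using \<delta>(2)[of z] by (simp add: dist_norm)
  qed
  have Hh': "H holomorphic_on ball 0 \<rho>" by (rule holomorphic_on_subset[OF Hh sub])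
  obtain \<Lambda> where \<Lambda>: "\<Lambda> holomorphic_on ball 0 \<rho>" "\<And>z. z \<in> ball 0 \<rho> \<Longrightarrow> H z = exp (\<Lambda> z)"
    using contractible_imp_holomorphic_log[OF Hh' convex_imp_contractible[OF convex_ball]] Hnz by metis
  have a0: "a \<noteq> 0" using na[of 0] by simp
  define N where "N z = z * exp (\<Lambda> z / a)" for z
  have dL: "(\<Lambda> has_field_derivative deriv \<Lambda> z) (at z)" if "z \<in> ball 0 \<rho>" for z
    using holomorphic_derivI[OF \<Lambda>(1) open_ball that] .
  have dN: "(N has_field_derivative exp (\<Lambda> z / a) + z * (exp (\<Lambda> z / a) * (deriv \<Lambda> z / a))) (at z)"
    if "z \<in> ball 0 \<rho>" for z
    unfolding N_def[abs_def] using a0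
    by (auto intro!: derivative_eq_intros dL[OF that] simp: field_simps)
  have Nh: "N holomorphic_on ball 0 \<rho>"
    by (rule holomorphic_from_DERIV[OF open_ball]) (use dN in blast)
  have N0: "N 0 = 0" unfolding N_def by simp
  have dN0: "deriv N 0 \<noteq> 0" using DERIV_imp_deriv[OF dN[of 0]] \<rho>(1) by simp
  have eq: "(N z) powi d * (deriv N z)^k = z powi d * g z ^ k" if z: "z \<in> ball 0 \<rho> - {0}" for z
  proof -
    have zb: "z \<in> ball 0 \<rho>" using z by auto
    have zr: "z \<in> ball 0 r" using zb sub by auto
    define W where "W = exp (\<Lambda> z / a)"
    define L' where "L' = deriv \<Lambda> z"
    have W0: "W \<noteq> 0" unfolding W_def by simp
    have dH: "(H has_field_derivative a * deriv G z) (at z)"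
      unfolding H_def[abs_def] using holomorphic_derivI[OF G(1) open_ball zr] by (rule DERIV_cmult)
    have dH2: "(H has_field_derivative exp (\<Lambda> z) * L') (at z)"
    proof -
      have "((\<lambda>z. exp (\<Lambda> z)) has_field_derivative exp (\<Lambda> z) * L') (at z)"
        unfolding L'_def by (auto intro!: derivative_eq_intros dL[OF zb])
      then show ?thesis
        by (rule has_field_derivative_transform_within_open[OF _ open_ball zb]) (use \<Lambda>(2) in auto)
    qed
    have HL: "H z * L' = a * deriv G z" using DERIV_unique[OF dH2 dH] \<Lambda>(2)[OF zb] by simp
    have Hz: "H z \<noteq> 0" using Hnz[OF zb] .
    have dNz: "deriv N z = W * g z / H z"
    proof -
      have "deriv N z = W * (1 + z * L' / a)"
        using DERIV_imp_deriv[OF dN[OF zb]] unfolding W_def L'_def using a0 by (simp add: field_simps)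
      also have "1 + z * L' / a = (H z + z * (H z * L') / a) / H z" using Hz by (simp add: field_simps)
      also have "H z + z * (H z * L') / a = a * G z + z * deriv G z" using a0 by (simp only: HL) (simp add: H_def)
      also have "\<dots> = g z" using G(2) zr by blast
      finally show ?thesis by simp
    qed
    have Wp: "W powi d * W ^ k = H z ^ k"
    proof -
      have "W powi d * W ^ k = exp (of_int d * (\<Lambda> z / a)) * exp (of_nat k * (\<Lambda> z / a))"
        unfolding W_def by (simp add: exp_power_int exp_of_nat_mult[symmetric])
      also have "\<dots> = exp ((of_int d + of_nat k) / a * \<Lambda> z)"
        by (simp add: exp_add[symmetric] algebra_simps add_divide_distrib)
      also have "(of_int d + of_nat k) / a = of_nat k"
        unfolding a_def p_def using kz a0 unfolding a_def p_def by (simp add: field_simps)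
      also have "exp (of_nat k * \<Lambda> z) = H z ^ k" using \<Lambda>(2)[OF zb] by (simp add: exp_of_nat_mult)
      finally show ?thesis .
    qed
    have "(N z) powi d * (deriv N z)^k = z powi d * (W powi d * W ^ k) * (g z ^ k / H z ^ k)"
      unfolding N_def W_def[symmetric] dNz by (simp add: power_int_mult_distrib power_mult_distrib power_divide mult_ac)
    also have "\<dots> = z powi d * g z ^ k" unfolding Wp using Hz by simp
    finally show ?thesis .
  qed
  show ?thesis using \<rho> Nh N0 dN0 eq by blast
qed

lemma part1a:
  assumes reg: "regular_end d r \<phi>" and k: "k \<ge> 1" and nn: "\<not> (\<exists>n::int. n \<ge> 1 \<and> d = - n * int k)"
  shows "hol_transl k r \<phi> = Zk_class k 0"
proof (cases "int k dvd d")
  case False then show ?thesis using hol_notdvd[OF reg k] by blast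
next
  case True
  then obtain e' where e': "d = int k * e'" by blast
  show ?thesis
  proof (cases "e' \<ge> 0")
    case True
    then have "d = int k * int (nat e')" using e' by simp
    then show ?thesis using hol_pos[OF reg k] by blast
  next
    case False
    then have "- e' \<ge> 1 \<and> d = - (- e') * int k" using e' by simp
    then show ?thesis using nn by blast
  qed
qed

lemma ends_equivI:
  fixes psiN :: "complex \<Rightarrow> complex"
  assumes h1: "N1 holomorphic_on ball 0 \<rho>1" and z1: "N1 0 = 0" and d1: "deriv N1 0 \<noteq> 0" and p1: "0 < \<rho>1"
    and r1: "\<rho>1 \<le> r1"
    and e1: "\<forall>z\<in>ball 0 \<rho>1 - {0}. psiN (N1 z) * (deriv N1 z)^k = \<phi>1 z"
    and h2: "N2 holomorphic_on ball 0 \<rho>2" and z2: "N2 0 = 0" and d2: "deriv N2 0 \<noteq> 0" and p2: "0 < \<rho>2"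
    and r2: "\<rho>2 \<le> r2"
    and e2: "\<forall>z\<in>ball 0 \<rho>2 - {0}. psiN (N2 z) * (deriv N2 z)^k = \<phi>2 z"
  shows "ends_equiv k r1 \<phi>1 r2 \<phi>2"
proof -
  obtain \<epsilon> h where H: "0 < \<epsilon>" "\<epsilon> \<le> \<rho>1" "h holomorphic_on ball 0 \<epsilon>" "inj_on h (ball 0 \<epsilon>)"
      "h 0 = 0" "h ` ball 0 \<epsilon> \<subseteq> ball 0 \<rho>2" "\<forall>z\<in>ball 0 \<epsilon> - {0}. \<phi>2 (h z) * (deriv h z) ^ k = \<phi>1 z"
    using compose_nf[OF h1 z1 d1 p1 e1 h2 z2 d2 p2 e2] by blast
  have "ball (0::complex) \<rho>2 \<subseteq> ball 0 r2" using r2 by auto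
  then show ?thesis unfolding ends_equiv_def using H r1
    by (intro exI[of _ \<epsilon>] exI[of _ h]) auto
qed

lemma reg_neg_data:
  assumes reg: "regular_end d r \<phi>" and k: "k \<ge> 1" and n: "n = Suc m" and d: "d = - (int n * int k)"
  obtains g a q where "0 < r" "g holomorphic_on ball 0 r" "\<forall>z\<in>ball 0 r. g z \<noteq> 0"
    "\<forall>z\<in>ball 0 r - {0}. \<phi> z = z powi d * g z ^ k"
    "q holomorphic_on ball 0 r" "\<forall>z\<in>ball 0 r. g z = (\<Sum>j<n. a j * z^j) + z^n * q z"
    "hol_transl k r \<phi> = Zk_class k (2 * of_real pi * \<i> * a m)"
proof -
  obtain f g where fg: "0 < r" "f holomorphic_on ball 0 r" "\<forall>z\<in>ball 0 r. f z \<noteq> 0"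
    "\<forall>z\<in>ball 0 r - {0}. \<phi> z = z powi d * f z"
    "g holomorphic_on ball 0 r" "\<forall>z\<in>ball 0 r. g z ^ k = f z" "\<forall>z\<in>ball 0 r. g z \<noteq> 0"
    using reg_end_root[OF reg k] by metis
  have phi: "\<forall>z\<in>ball 0 r - {0}. \<phi> z = z powi d * g z ^ k" using fg(4,6) by auto
  obtain a q where aq: "q holomorphic_on ball 0 r" "\<forall>z\<in>ball 0 r. g z = (\<Sum>j<n. a j * z^j) + z^n * q z"
    using taylor_decomp[OF fg(5,1)] by blast
  have "hol_transl k r \<phi> = Zk_class k (2 * of_real pi * \<i> * a m)"
    by (rule hol_neg[OF k fg(1,5) phi fg(7) n d aq])
  then show ?thesis using that fg(1,5,7) phi aq by blast
qed

lemma part1b: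
  assumes reg: "regular_end d r \<phi>" and k: "k \<ge> 1" and d: "d = - int k"
  shows "hol_transl k r \<phi> \<noteq> Zk_class k 0"
proof -
  have d': "d = - (int 1 * int k)" using d by simp
  have n1: "(1::nat) = Suc 0" by simp
  obtain g a q where D: "0 < r" "g holomorphic_on ball 0 r" "\<forall>z\<in>ball 0 r. g z \<noteq> 0"
    "\<forall>z\<in>ball 0 r - {0}. \<phi> z = z powi d * g z ^ k"
    "q holomorphic_on ball 0 r" "\<forall>z\<in>ball 0 r. g z = (\<Sum>j<1. a j * z^j) + z^1 * q z"
    "hol_transl k r \<phi> = Zk_class k (2 * of_real pi * \<i> * a 0)"
    by (rule reg_neg_data[OF reg k n1 d'])
  have "g 0 = a 0" using D(1,6) by simp
  then have "a 0 \<noteq> 0" using D(1,3) by auto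
  then have "2 * of_real pi * \<i> * a 0 \<noteq> 0" by simp
  then show ?thesis using D(7) Zk_class_eq_0_iff by metis
qed

lemma exist_part:
  assumes k: "k \<ge> 1" and tau: "\<tau> \<in> range (Zk_class k)"
    and c1: "\<tau> \<noteq> Zk_class k 0 \<longrightarrow> (\<exists>n::int. n \<ge> 1 \<and> d = - n * int k)"
    and c2: "d = - int k \<longrightarrow> \<tau> \<noteq> Zk_class k 0"
  shows "\<exists>r \<phi>. regular_end d r \<phi> \<and> hol_transl k r \<phi> = \<tau>"
proof -
  obtain b where b: "\<tau> = Zk_class k b" using tau by blast
  show ?thesis
  proof (cases "b = 0")
    case True
    define \<phi> where "\<phi> z = z powi d" for z :: complex
    have reg: "regular_end d 1 \<phi>" unfolding regular_end_def \<phi>_def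
      by (intro conjI exI[of _ "\<lambda>_. 1"]) auto
    show ?thesis
    proof (cases "\<exists>n::int. n \<ge> 1 \<and> d = - n * int k")
      case False
      then show ?thesis by (intro exI[of _ 1] exI[of _ \<phi>]) (use part1a[OF reg k False] b True reg in auto)
    next
      case True
      then obtain n :: int where n: "n \<ge> 1" "d = - n * int k" by blast
      have "n \<noteq> 1" using c2 b \<open>b = 0\<close> n by auto
      then have n2: "n \<ge> 2" using n(1) by linarith
      define m where "m = nat n - 1"
      have m: "nat n = Suc m" "m \<ge> 1" unfolding m_def using n2 by auto
      have d': "d = - (int (nat n) * int k)" using n by simp
      define a where "a j = (if j = 0 then 1 else 0 :: complex)" for j :: nat
      have dec: "\<forall>z\<in>ball 0 1. (\<lambda>_. 1::complex) z = (\<Sum>j<nat n. a j * z^j) + z^(nat n) * (\<lambda>_. 0) z"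
        unfolding m(1) a_def by (simp add: sum.lessThan_Suc_shift del: sum.lessThan_Suc)
      have "hol_transl k 1 \<phi> = Zk_class k (2 * of_real pi * \<i> * a m)"
        by (rule hol_neg[OF k _ _ _ _ m(1) d' _ dec]) (auto simp: \<phi>_def)
      moreover have "a m = 0" unfolding a_def using m by simp
      ultimately show ?thesis using reg b \<open>b = 0\<close> by auto
    qed
  next
    case False
    then have "\<tau> \<noteq> Zk_class k 0" using b Zk_class_eq_0_iff by metis
    then obtain n :: int where n: "n \<ge> 1" "d = - n * int k" using c1 by blast
    define c where "c = b / (2 * of_real pi * \<i>)"
    have c0: "c \<noteq> 0" unfolding c_def using False by simp
    have bc: "2 * of_real pi * \<i> * c = b" unfolding c_def by simp
    define m where "m = nat n - 1"
    have m: "nat n = Suc m" unfolding m_def using n(1) by auto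
    have d': "d = - (int (nat n) * int k)" using n by simp
    show ?thesis
    proof (cases "m = 0")
      case True
      define \<phi> where "\<phi> z = z powi d * c ^ k" for z :: complex
      have reg: "regular_end d 1 \<phi>" unfolding regular_end_def \<phi>_def
        by (intro conjI exI[of _ "\<lambda>_. c ^ k"]) (auto simp: c0)
      define a where "a j = c" for j :: nat
      have dec: "\<forall>z\<in>ball 0 1. (\<lambda>_. c) z = (\<Sum>j<nat n. a j * z^j) + z^(nat n) * (\<lambda>_. 0) z"
        unfolding m True a_def by simp
      have "hol_transl k 1 \<phi> = Zk_class k (2 * of_real pi * \<i> * a m)"
        by (rule hol_neg[OF k _ _ _ _ m d' _ dec]) (auto simp: \<phi>_def c0)
      then show ?thesis using reg b bc unfolding a_def by auto
    next
      case False
      then have m1: "m \<ge> 1" by simp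
      define r where "r = 1 / (norm c + 1)"
      have nc: "0 < norm c + 1" by (simp add: add_nonneg_pos)
      have r: "0 < r" "r \<le> 1" unfolding r_def using nc by (auto simp: field_simps)
      have small: "norm (c * z^m) < 1" if "z \<in> ball 0 r" for z :: complex
      proof -
        have nz: "norm z < r" using that by simp
        have "norm (z^m) \<le> norm z"
        proof -
          have "norm z \<le> 1" using nz r by simp
          then have "norm z ^ m \<le> norm z ^ 1" using power_decreasing[OF m1, of "norm z"] by simp
          then show ?thesis by (simp add: norm_power)
        qed
        then have "norm (c * z^m) \<le> norm c * norm z" by (simp add: norm_mult mult_left_mono)
        also have "\<dots> \<le> norm c * r" using nz by (simp add: mult_left_mono)
        also have "\<dots> < 1" unfolding r_def using nc by (simp add: field_simps)
        finally show ?thesis .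
      qed
      have gnz: "1 + c * z^m \<noteq> 0" if "z \<in> ball 0 r" for z :: complex
      proof
        assume "1 + c * z^m = 0"
        then have "c * z^m = -1" by (simp add: add_eq_0_iff)
        then show False using small[OF that] by simp
      qed
      define \<phi> where "\<phi> z = z powi d * (1 + c * z^m) ^ k" for z :: complex
      have reg: "regular_end d r \<phi>" unfolding regular_end_def \<phi>_def
        by (intro conjI exI[of _ "\<lambda>z. (1 + c * z^m) ^ k"] ballI r)
           (auto intro!: holomorphic_intros simp: gnz)
      define a where "a j = (if j = 0 then 1 else if j = m then c else 0)" for j :: nat
      have dec: "\<forall>z\<in>ball 0 r. (\<lambda>z. 1 + c * z^m) z = (\<Sum>j<nat n. a j * z^j) + z^(nat n) * (\<lambda>_. 0) z"
      proof
        fix z :: complex assume "z \<in> ball 0 r"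
        have "(\<Sum>j<Suc m. a j * z^j) = a 0 + (\<Sum>j<m. a (Suc j) * z^(Suc j))"
          by (simp add: sum.lessThan_Suc_shift del: sum.lessThan_Suc)
        also have "(\<Sum>j<m. a (Suc j) * z^(Suc j)) = c * z^m"
        proof -
          obtain m' where m': "m = Suc m'" using m1 by (cases m) auto
          have "(\<Sum>j<m. a (Suc j) * z^(Suc j)) = (\<Sum>j<m'. a (Suc j) * z^(Suc j)) + a m * z^m"
            unfolding m' by simp
          also have "(\<Sum>j<m'. a (Suc j) * z^(Suc j)) = 0"
            by (rule sum.neutral) (auto simp: a_def m')
          finally show ?thesis unfolding a_def using m1 by simp
        qed
        finally show "(\<lambda>z. 1 + c * z^m) z = (\<Sum>j<nat n. a j * z^j) + z^(nat n) * (\<lambda>_. 0) z"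
          unfolding m a_def by simp
      qed
      have "hol_transl k r \<phi> = Zk_class k (2 * of_real pi * \<i> * a m)"
        by (rule hol_neg[OF k r(1) _ _ _ m d' _ dec]) (auto intro!: holomorphic_intros simp: \<phi>_def gnz)
      moreover have "a m = c" unfolding a_def using m1 by simp
      ultimately show ?thesis using reg b bc by auto
    qed
  qed
qed

lemma uniq_part:
  assumes k: "k \<ge> 1" and R1: "regular_end d r1 \<phi>1" and R2: "regular_end d r2 \<phi>2"
    and H: "hol_transl k r1 \<phi>1 = hol_transl k r2 \<phi>2"
  shows "ends_equiv k r1 \<phi>1 r2 \<phi>2"
proof (cases "\<exists>n::int. n \<ge> 1 \<and> d = - n * int k")
  case False
  have cond: "\<forall>j::nat. int j * int k + d + int k \<noteq> 0"
  proof
    fix j :: nat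
    show "int j * int k + d + int k \<noteq> 0"
    proof
      assume "int j * int k + d + int k = 0"
      then have "int j + 1 \<ge> 1 \<and> d = - (int j + 1) * int k" by (simp add: algebra_simps)
      then show False using False by blast
    qed
  qed
  obtain f1 g1 where fg1: "0 < r1" "f1 holomorphic_on ball 0 r1" "\<forall>z\<in>ball 0 r1. f1 z \<noteq> 0"
    "\<forall>z\<in>ball 0 r1 - {0}. \<phi>1 z = z powi d * f1 z"
    "g1 holomorphic_on ball 0 r1" "\<forall>z\<in>ball 0 r1. g1 z ^ k = f1 z" "\<forall>z\<in>ball 0 r1. g1 z \<noteq> 0"
    using reg_end_root[OF R1 k] by metis
  obtain f2 g2 where fg2: "0 < r2" "f2 holomorphic_on ball 0 r2" "\<forall>z\<in>ball 0 r2. f2 z \<noteq> 0"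
    "\<forall>z\<in>ball 0 r2 - {0}. \<phi>2 z = z powi d * f2 z"
    "g2 holomorphic_on ball 0 r2" "\<forall>z\<in>ball 0 r2. g2 z ^ k = f2 z" "\<forall>z\<in>ball 0 r2. g2 z \<noteq> 0"
    using reg_end_root[OF R2 k] by metis
  have g10: "g1 0 \<noteq> 0" using fg1(1,7) by simp
  have g20: "g2 0 \<noteq> 0" using fg2(1,7) by simp
  obtain \<rho>1 N1 where N1: "0 < \<rho>1" "\<rho>1 \<le> r1" "N1 holomorphic_on ball 0 \<rho>1" "N1 0 = 0" "deriv N1 0 \<noteq> 0"
      "\<forall>z\<in>ball 0 \<rho>1 - {0}. (N1 z) powi d * (deriv N1 z)^k = z powi d * g1 z ^ k"
    using nf_a[OF fg1(5,1) g10 k cond] by blast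
  obtain \<rho>2 N2 where N2: "0 < \<rho>2" "\<rho>2 \<le> r2" "N2 holomorphic_on ball 0 \<rho>2" "N2 0 = 0" "deriv N2 0 \<noteq> 0"
      "\<forall>z\<in>ball 0 \<rho>2 - {0}. (N2 z) powi d * (deriv N2 z)^k = z powi d * g2 z ^ k"
    using nf_a[OF fg2(5,1) g20 k cond] by blast
  show ?thesis
  proof (rule ends_equivI[where psiN = "\<lambda>w. w powi d", OF N1(3,4,5,1,2) _ N2(3,4,5,1,2)])
    show "\<forall>z\<in>ball 0 \<rho>1 - {0}. (N1 z) powi d * (deriv N1 z)^k = \<phi>1 z"
      using N1(2,6) fg1(4,6) by auto
    show "\<forall>z\<in>ball 0 \<rho>2 - {0}. (N2 z) powi d * (deriv N2 z)^k = \<phi>2 z"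
      using N2(2,6) fg2(4,6) by auto
  qed
next
  case True
  then obtain n :: int where n: "n \<ge> 1" "d = - n * int k" by blast
  define nn where "nn = nat n"
  define m where "m = nn - 1"
  have nn: "nn = Suc m" unfolding m_def nn_def using n(1) by auto
  have d': "d = - (int nn * int k)" unfolding nn_def using n by simp
  obtain g1 a1 q1 where D1: "0 < r1" "g1 holomorphic_on ball 0 r1" "\<forall>z\<in>ball 0 r1. g1 z \<noteq> 0"
    "\<forall>z\<in>ball 0 r1 - {0}. \<phi>1 z = z powi d * g1 z ^ k"
    "q1 holomorphic_on ball 0 r1" "\<forall>z\<in>ball 0 r1. g1 z = (\<Sum>j<nn. a1 j * z^j) + z^nn * q1 z"
    "hol_transl k r1 \<phi>1 = Zk_class k (2 * of_real pi * \<i> * a1 m)"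
    by (rule reg_neg_data[OF R1 k nn d'])
  obtain g2 a2 q2 where D2: "0 < r2" "g2 holomorphic_on ball 0 r2" "\<forall>z\<in>ball 0 r2. g2 z \<noteq> 0"
    "\<forall>z\<in>ball 0 r2 - {0}. \<phi>2 z = z powi d * g2 z ^ k"
    "q2 holomorphic_on ball 0 r2" "\<forall>z\<in>ball 0 r2. g2 z = (\<Sum>j<nn. a2 j * z^j) + z^nn * q2 z"
    "hol_transl k r2 \<phi>2 = Zk_class k (2 * of_real pi * \<i> * a2 m)"
    by (rule reg_neg_data[OF R2 k nn d'])
  obtain \<eta> where \<eta>: "\<eta>^k = 1" "2 * of_real pi * \<i> * a2 m = \<eta> * (2 * of_real pi * \<i> * a1 m)"
    using Zk_class_eqD[OF k] H D1(7) D2(7) by metis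
  have \<eta>0: "\<eta> \<noteq> 0" using \<eta>(1) k by (metis not_one_le_zero power_0_left zero_neq_one)
  have a2m: "a2 m / \<eta> = a1 m" using \<eta>(2) \<eta>0 by (simp add: field_simps)
  define g2' where "g2' z = g2 z / \<eta>" for z
  define a2' where "a2' j = a2 j / \<eta>" for j
  define q2' where "q2' z = q2 z / \<eta>" for z
  have g2'h: "g2' holomorphic_on ball 0 r2" unfolding g2'_def using D2(2) \<eta>0 by (intro holomorphic_intros) auto
  have q2'h: "q2' holomorphic_on ball 0 r2" unfolding q2'_def using D2(5) \<eta>0 by (intro holomorphic_intros) auto
  have dec2': "\<forall>z\<in>ball 0 r2. g2' z = (\<Sum>j<nn. a2' j * z^j) + z^nn * q2' z"
    unfolding g2'_def a2'_def q2'_def using D2(6) by (simp add: sum_divide_distrib add_divide_distrib)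
  have g2'k: "g2' z ^ k = g2 z ^ k" for z unfolding g2'_def using \<eta>(1) by (simp add: power_divide)
  have phi2': "\<forall>z\<in>ball 0 r2 - {0}. \<phi>2 z = z powi d * g2' z ^ k" using D2(4) g2'k by simp
  have a2'm: "a2' m = a1 m" unfolding a2'_def using a2m .
  have g10: "g1 0 \<noteq> 0" using D1(1,3) by simp
  have g20: "g2' 0 \<noteq> 0" using D2(1,3) \<eta>0 unfolding g2'_def by simp
  have g1a: "g1 0 = a1 0" using D1(1,6) unfolding nn by (simp add: sum_at_0)
  have g2a: "g2' 0 = a2' 0" using dec2' D2(1) unfolding nn by (simp add: sum_at_0)
  show ?thesis
  proof (cases "m = 0")
    case True
    have dk: "d = - int k" using d' nn True by simp
    obtain N1 where N1: "N1 holomorphic_on ball 0 r1" "N1 0 = 0" "deriv N1 0 \<noteq> 0"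
        "\<forall>z\<in>ball 0 r1 - {0}. (g1 0 / N1 z) * deriv N1 z = g1 z / z"
      using nf_b1[OF D1(2,1) g10] by blast
    obtain N2 where N2: "N2 holomorphic_on ball 0 r2" "N2 0 = 0" "deriv N2 0 \<noteq> 0"
        "\<forall>z\<in>ball 0 r2 - {0}. (g2' 0 / N2 z) * deriv N2 z = g2' z / z"
      using nf_b1[OF g2'h D2(1) g20] by blast
    have same: "g2' 0 = g1 0" using g1a g2a a2'm True by simp
    have key: "(c / z) ^ k = z powi d * c ^ k" for c z :: complex
      unfolding dk by (simp add: power_int_minus power_divide field_simps)
    show ?thesis
    proof (rule ends_equivI[where psiN = "\<lambda>w. (g1 0 / w) ^ k", OF N1(1,2,3) D1(1) order_refl _ N2(1,2,3) D2(1) order_refl])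
      show "\<forall>z\<in>ball 0 r1 - {0}. (g1 0 / N1 z) ^ k * (deriv N1 z)^k = \<phi>1 z"
      proof
        fix z :: complex assume z: "z \<in> ball 0 r1 - {0}"
        have "(g1 0 / N1 z) ^ k * (deriv N1 z)^k = (g1 z / z) ^ k"
          using N1(4) z by (simp add: power_mult_distrib[symmetric])
        then show "(g1 0 / N1 z) ^ k * (deriv N1 z)^k = \<phi>1 z" using D1(4) z key by simp
      qed
      show "\<forall>z\<in>ball 0 r2 - {0}. (g1 0 / N2 z) ^ k * (deriv N2 z)^k = \<phi>2 z"
      proof
        fix z :: complex assume z: "z \<in> ball 0 r2 - {0}"
        have "(g1 0 / N2 z) ^ k * (deriv N2 z)^k = (g2' z / z) ^ k"
          using N2(4) z same by (simp add: power_mult_distrib[symmetric])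
        then show "(g1 0 / N2 z) ^ k * (deriv N2 z)^k = \<phi>2 z" using phi2' z key by simp
      qed
    qed
  next
    case False
    then have m1: "m \<ge> 1" by simp
    obtain \<rho>1 N1 where N1: "0 < \<rho>1" "\<rho>1 \<le> r1" "N1 holomorphic_on ball 0 \<rho>1" "N1 0 = 0" "deriv N1 0 \<noteq> 0"
        "\<forall>z\<in>ball 0 \<rho>1 - {0}. ((N1 z) powi (- int nn) + a1 m / N1 z) * deriv N1 z = z powi (- int nn) * g1 z"
      using nf_b2[OF D1(2,1) g10 nn m1 D1(5,6)] by blast
    obtain \<rho>2 N2 where N2: "0 < \<rho>2" "\<rho>2 \<le> r2" "N2 holomorphic_on ball 0 \<rho>2" "N2 0 = 0" "deriv N2 0 \<noteq> 0"
        "\<forall>z\<in>ball 0 \<rho>2 - {0}. ((N2 z) powi (- int nn) + a2' m / N2 z) * deriv N2 z = z powi (- int nn) * g2' z"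
      using nf_b2[OF g2'h D2(1) g20 nn m1 q2'h dec2'] by blast
    have key: "(z powi (- int nn) * c) ^ k = z powi d * c ^ k" for c z :: complex
    proof -
      have "z powi d = (z powi (- int nn)) powi (int k)" unfolding d' by (simp only: power_int_mult[symmetric]) simp
      then show ?thesis by (simp add: power_mult_distrib)
    qed
    show ?thesis
    proof (rule ends_equivI[where psiN = "\<lambda>w. (w powi (- int nn) + a1 m / w) ^ k", OF N1(3,4,5,1,2) _ N2(3,4,5,1,2)])
      show "\<forall>z\<in>ball 0 \<rho>1 - {0}. ((N1 z) powi (- int nn) + a1 m / N1 z) ^ k * (deriv N1 z)^k = \<phi>1 z"
      proof
        fix z :: complex assume z: "z \<in> ball 0 \<rho>1 - {0}"
        have "((N1 z) powi (- int nn) + a1 m / N1 z) ^ k * (deriv N1 z)^k = (z powi (- int nn) * g1 z) ^ k"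
          using N1(6) z by (simp add: power_mult_distrib[symmetric])
        then show "((N1 z) powi (- int nn) + a1 m / N1 z) ^ k * (deriv N1 z)^k = \<phi>1 z"
          using D1(4) z N1(2) key by auto
      qed
      show "\<forall>z\<in>ball 0 \<rho>2 - {0}. ((N2 z) powi (- int nn) + a1 m / N2 z) ^ k * (deriv N2 z)^k = \<phi>2 z"
      proof
        fix z :: complex assume z: "z \<in> ball 0 \<rho>2 - {0}"
        have "((N2 z) powi (- int nn) + a1 m / N2 z) ^ k * (deriv N2 z)^k = (z powi (- int nn) * g2' z) ^ k"
          using N2(6) z a2'm by (simp add: power_mult_distrib[symmetric])
        then show "((N2 z) powi (- int nn) + a1 m / N2 z) ^ k * (deriv N2 z)^k = \<phi>2 z"
          using phi2' z N2(2) key by auto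
      qed
    qed
  qed
qed

theorem proposition5p1:
  fixes k :: nat
  assumes "k \<ge> 1"
  shows "(\<forall>d r \<phi>. regular_end d r \<phi> \<longrightarrow>
            (hol_transl k r \<phi> \<noteq> Zk_class k 0 \<longrightarrow> (\<exists>n::int. n \<ge> 1 \<and> d = - n * int k)) \<and>
            (d = - int k \<longrightarrow> hol_transl k r \<phi> \<noteq> Zk_class k 0))
       \<and> (\<forall>d \<tau>. \<tau> \<in> range (Zk_class k) \<and>
            (\<tau> \<noteq> Zk_class k 0 \<longrightarrow> (\<exists>n::int. n \<ge> 1 \<and> d = - n * int k)) \<and>
            (d = - int k \<longrightarrow> \<tau> \<noteq> Zk_class k 0) \<longrightarrow>
            (\<exists>r \<phi>. regular_end d r \<phi> \<and> hol_transl k r \<phi> = \<tau>) \<and>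
            (\<forall>r1 \<phi>1 r2 \<phi>2. regular_end d r1 \<phi>1 \<and> hol_transl k r1 \<phi>1 = \<tau> \<and>
                 regular_end d r2 \<phi>2 \<and> hol_transl k r2 \<phi>2 = \<tau> \<longrightarrow>
                 ends_equiv k r1 \<phi>1 r2 \<phi>2))"
proof (intro conjI allI impI)
  fix d r \<phi> assume R: "regular_end d r \<phi>"
  show "\<exists>n::int. n \<ge> 1 \<and> d = - n * int k" if "hol_transl k r \<phi> \<noteq> Zk_class k 0"
    using part1a[OF R assms] that by blast
  show "hol_transl k r \<phi> \<noteq> Zk_class k 0" if "d = - int k"
    using part1b[OF R assms that] .
next
  fix d and \<tau> :: "complex set"
  assume A: "\<tau> \<in> range (Zk_class k) \<and>
            (\<tau> \<noteq> Zk_class k 0 \<longrightarrow> (\<exists>n::int. n \<ge> 1 \<and> d = - n * int k)) \<and>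
            (d = - int k \<longrightarrow> \<tau> \<noteq> Zk_class k 0)"
  show "\<exists>r \<phi>. regular_end d r \<phi> \<and> hol_transl k r \<phi> = \<tau>"
    using exist_part[OF assms] A by blast
  fix r1 \<phi>1 r2 \<phi>2
  assume B: "regular_end d r1 \<phi>1 \<and> hol_transl k r1 \<phi>1 = \<tau> \<and> regular_end d r2 \<phi>2 \<and> hol_transl k r2 \<phi>2 = \<tau>"
  then show "ends_equiv k r1 \<phi>1 r2 \<phi>2"
    using uniq_part[OF assms] by metis
qed


end
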